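(* For every parity game $\mathcal{G}$, the algorithm $\mathtt{solve}(\mathcal{G})$ (defined in the context) solves $\mathcal{G}$: it terminates and returns $W_0,W_1,\sigma_0,\sigma_1$ such that $W_0\cup W_1=V$, $W_0\cap W_1=\emptyset$, and for each player $\alpha\in\{0,1\}$, $\sigma_\alpha$ is a strategy of player $\alpha$ such that every play starting in $W_\alpha$ and consistent with $\sigma_\alpha$ is won by $\alpha$ (so $W_\alpha$ is exactly the set of vertices won by $\alpha$).
   Context: Parity games: $\mathcal{G}=(V_0,V_1,E,\mathrm{pr})$, $V=V_0\cup V_1$ finite, partitioned into vertices of Even ($0$) and Odd ($1$); $E\subseteq V\times V$ with every vertex having a successor; $\mathrm{pr}:V\to\{0,\dots,d\}$. $E(u)=\{v:(u,v)\in E\}$, $\mathrm{pr}(U)=\max_{u\in U}\mathrm{pr}(u)$, $\mathrm{pr}^{-1}(p)$ the set of vertices of priority $p$, $\overline{\alpha}=1-\alpha$. A play (infinite path) is won by Even iff the highest priority occurring infinitely often is even, otherwise by Odd; a cycle is won by $\alpha$ if its highest priority has parity $\alpha$. A strategy of $\alpha$ is a partial function $\sigma$ on $V_\alpha$ with $\sigma(v)\in E(v)$; a play is consistent with $\sigma$ if every vertex $v\in\mathrm{dom}(\sigma)$ on it is followed by $\sigma(v)$. A vertex is won by $\alpha$ if $\alpha$ has a strategy all of whose consistent plays from it are won by $\alpha$. For $U\subseteq V$, $\mathcal{G}\cap U$ is the subgame with vertices $V\cap U$ and edges $E\cap(U\times U)$, and $\mathcal{G}\setminus U=\mathcal{G}\cap(V\setminus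 U)$. A $p$-tangle is a nonempty $U\subseteq V$ with $p=\mathrm{pr}(U)$ such that for $\alpha\equiv p\pmod 2$ there is a strategy $\sigma:U\cap V_\alpha\to U$ (witness strategy $\sigma_T(U)$) with $(U,E\cap(\sigma\cup((U\cap V_{\overline{\alpha}})\times U)))$ strongly connected and all its cycles won by $\alpha$ ("won by $\alpha$"). For a tangle $t$ won by $\alpha$ in a game with edge set $E$, $E_T(t)=\{v\notin t:\exists u\in t\cap V_{\overline{\alpha}},(u,v)\in E\}$. $T_\alpha$ denotes the tangles of $T$ won by $\alpha$; for a subgame $\mathcal{G}'$, $T\cap\mathcal{G}'$ denotes the tangles of $T$ contained in its vertex set. Standard attractor: $\mathit{Attr}^{\mathcal{G}}_\alpha(A)$ is the least $Z\supseteq A$ containing every $v\in V_\alpha$ with $E(v)\cap Z\neq\emptyset$ and every $v\in V_{\overline{\alpha}}$ with $E(v)\subseteq Z$, computed iteratively with a strategy $\sigma$ mapping each $\alpha$-vertex added to $Z$ to a successor already in $Z$ (and each $\alpha$-vertex of $A$ to a successor in $Z$ once one exists). Tangle attractor $\mathit{TAttr}^{\mathcal{G},T}_\alpha(A)$: the least $Z\supseteq A$ closed under the two rules above and additionally containing every vertex of every $t\in T_\alpha$ with $\emptyset\neq E_T(t)\subseteq Z$ ($E_T$ computed in $\mathcal{G}$); its strategy is built as for $\mathit{Attr}$, and when the vertices of a tangle $t$ are added, $\sigma(u):=\sigma_T(t)(u)$ for every $\alpha$-vertex $u\in t$ not yet in $\mathrm{dom}(\sigma)$. extract-tangles$(Z,\sigma)$,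 for a subgame $\mathcal{G}'=(V',E')$ with top priority $p$, $\alpha\equiv p$, region $Z\subseteq V'$ and strategy $\sigma$: let $Y_Z$ be the greatest $X\subseteq Z$ such that every $v\in X\cap V_{\overline{\alpha}}$ has $E'(v)\subseteq X$ and every $v\in X\cap V_\alpha$ has $\sigma(v)\in X$; let $H$ be the graph on $Y_Z$ with edges $(v,\sigma(v))$ for $v\in Y_Z\cap V_\alpha$ and $(v,w)\in E'$ for $v\in Y_Z\cap V_{\overline{\alpha}}$; return all bottom strongly connected components of $H$ that contain at least one edge of $H$, each with witness strategy $\sigma$ restricted to it. $\mathtt{search}(\mathcal{G},T)$: repeat forever: set $r:=\emptyset$ (a partial function $V\to\mathbb{N}$) and $Y:=\emptyset$; while $V\setminus\mathrm{dom}(r)\neq\emptyset$: let $\mathcal{G}':=\mathcal{G}\setminus\mathrm{dom}(r)$ with vertex set $V'$, $T':=T\cap\mathcal{G}'$, $p:=\mathrm{pr}(\mathcal{G}')$, $\alpha:=p\bmod 2$; compute $(Z,\sigma):=\mathit{TAttr}^{\mathcal{G}',T'}_\alpha(\mathrm{pr}^{-1}(p)\cap V')$; let $A:=$ extract-tangles$(Z,\sigma)$; if some $t\in A$ has $E_T(t)=\emptyset$ with $E_T$ computed in $\mathcal{G}$, return $(T\cup Y,t)$; otherwise set $r(v):=p$ for all $v\in Z$ and $Y:=Y\cup A$. After the while-loop, set $T:=T\cup Y$. $\mathtt{solve}(\mathcal{G})$: set $W_0=W_1=\emptyset$, $\sigma_0=\sigma_1=\emptyset$, $T=\emptyset$;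 while $\mathcal{G}$ has a vertex: $(T,d):=\mathtt{search}(\mathcal{G},T)$; $\alpha:=\mathrm{pr}(d)\bmod 2$; $(D,\sigma):=\mathit{Attr}^{\mathcal{G}}_\alpha(d)$; $W_\alpha:=W_\alpha\cup D$; $\sigma_\alpha:=\sigma_\alpha\cup\sigma_T(d)\cup\sigma$; $\mathcal{G}:=\mathcal{G}\setminus D$; $T:=$ the tangles of $T$ contained in the remaining vertex set. Finally return $W_0,W_1,\sigma_0,\sigma_1$. *)

theory Defs
  imports Main
begin

text \<open>Players are the natural numbers 0 (Even) and 1 (Odd); the opponent of alpha is 1 - alpha.\<close>

record 'v pgame =
  V0 :: "'v set"
  V1 :: "'v set"
  E  :: "('v \<times> 'v) set"
  pr :: "'v \<Rightarrow> nat"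

definition V :: "('v, 'a) pgame_scheme \<Rightarrow> 'v set" where
  "V G = V0 G \<union> V1 G"

definition pl :: "('v, 'a) pgame_scheme \<Rightarrow> nat \<Rightarrow> 'v set" where
  "pl G \<alpha> = (if \<alpha> = 0 then V0 G else V1 G)"

definition parity_game :: "('v, 'a) pgame_scheme \<Rightarrow> bool" where
  "parity_game G \<longleftrightarrow> finite (V G) \<and> V0 G \<inter> V1 G = {} \<and> E G \<subseteq> V G \<times> V G
     \<and> (\<forall>v\<in>V G. \<exists>w. (v, w) \<in> E G)"

type_synonym 'v strat = "'v \<Rightarrow> 'v option"
type_synonym 'v tangle = "'v set \<times> 'v strat"

definition strategy :: "('v, 'a) pgame_scheme \<Rightarrow> nat \<Rightarrow> 'v strat \<Rightarrow> bool" where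
  "strategy G \<alpha> \<sigma> \<longleftrightarrow> dom \<sigma> \<subseteq> pl G \<alpha> \<and> (\<forall>v w. \<sigma> v = Some w \<longrightarrow> (v, w) \<in> E G)"

definition play :: "('v, 'a) pgame_scheme \<Rightarrow> (nat \<Rightarrow> 'v) \<Rightarrow> bool" where
  "play G \<pi> \<longleftrightarrow> (\<forall>i. (\<pi> i, \<pi> (Suc i)) \<in> E G)"

definition consistent :: "'v strat \<Rightarrow> (nat \<Rightarrow> 'v) \<Rightarrow> bool" where
  "consistent \<sigma> \<pi> \<longleftrightarrow> (\<forall>i. \<pi> i \<in> dom \<sigma> \<longrightarrow> \<sigma> (\<pi> i) = Some (\<pi> (Suc i)))"

definition play_winner :: "('v, 'a) pgame_scheme \<Rightarrow> (nat \<Rightarrow> 'v) \<Rightarrow> nat" where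
  "play_winner G \<pi> = Max {p. infinite {i. pr G (\<pi> i) = p}} mod 2"

definition won_by :: "('v, 'a) pgame_scheme \<Rightarrow> nat \<Rightarrow> 'v \<Rightarrow> bool" where
  "won_by G \<alpha> v \<longleftrightarrow> v \<in> V G \<and> (\<exists>\<sigma>. strategy G \<alpha> \<sigma> \<and>
     (\<forall>\<pi>. play G \<pi> \<and> \<pi> 0 = v \<and> consistent \<sigma> \<pi> \<longrightarrow> play_winner G \<pi> = \<alpha>))"

definition solves :: "('v, 'a) pgame_scheme \<Rightarrow> (nat \<Rightarrow> 'v set) \<Rightarrow> (nat \<Rightarrow> 'v strat) \<Rightarrow> bool" where
  "solves G W S \<longleftrightarrow> W 0 \<union> W 1 = V G \<and> W 0 \<inter> W 1 = {} \<and>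
     (\<forall>\<alpha>\<in>{0, 1}. strategy G \<alpha> (S \<alpha>) \<and>
        (\<forall>\<pi>. play G \<pi> \<and> \<pi> 0 \<in> W \<alpha> \<and> consistent (S \<alpha>) \<pi> \<longrightarrow> play_winner G \<pi> = \<alpha>) \<and>
        W \<alpha> = {v. won_by G \<alpha> v})"

definition edges_in :: "('v, 'a) pgame_scheme \<Rightarrow> 'v set \<Rightarrow> ('v \<times> 'v) set" where
  "edges_in G U = E G \<inter> (U \<times> U)"

definition succs :: "('v, 'a) pgame_scheme \<Rightarrow> 'v set \<Rightarrow> 'v \<Rightarrow> 'v set" where
  "succs G U v = {w. (v, w) \<in> edges_in G U}"

definition prio :: "('v, 'a) pgame_scheme \<Rightarrow> 'v set \<Rightarrow> nat" where
  "prio G U = Max (pr G ` U)"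

text \<open>The player winning a (p-)tangle: parity of its top priority.\<close>
definition tw :: "('v, 'a) pgame_scheme \<Rightarrow> 'v tangle \<Rightarrow> nat" where
  "tw G t = prio G (fst t) mod 2"

definition escapes :: "('v, 'a) pgame_scheme \<Rightarrow> 'v set \<Rightarrow> 'v tangle \<Rightarrow> 'v set" where
  "escapes G U t = {v. v \<notin> fst t \<and> (\<exists>u \<in> fst t \<inter> pl G (1 - tw G t). (u, v) \<in> edges_in G U)}"

text \<open>One step of the iterative computation of the tangle attractor
  TAttr^{G cap U, T}_alpha(A), together with its strategy. The standard attractor is the
  case T = {}. The result is reached when no step applies.\<close>
inductive attr_step :: "('v, 'a) pgame_scheme \<Rightarrow> 'v set \<Rightarrow> 'v tangle set \<Rightarrow> nat \<Rightarrow> 'v set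
    \<Rightarrow> 'v set \<times> 'v strat \<Rightarrow> 'v set \<times> 'v strat \<Rightarrow> bool"
  for G U T \<alpha> A where
  own: "\<lbrakk>v \<in> U; v \<notin> Z; v \<in> pl G \<alpha>; w \<in> Z; (v, w) \<in> edges_in G U\<rbrakk>
        \<Longrightarrow> attr_step G U T \<alpha> A (Z, \<sigma>) (insert v Z, \<sigma>(v \<mapsto> w))"
| opp: "\<lbrakk>v \<in> U; v \<notin> Z; v \<in> pl G (1 - \<alpha>); succs G U v \<subseteq> Z\<rbrakk>
        \<Longrightarrow> attr_step G U T \<alpha> A (Z, \<sigma>) (insert v Z, \<sigma>)"
| target: "\<lbrakk>v \<in> A; v \<in> pl G \<alpha>; \<sigma> v = None; w \<in> Z; (v, w) \<in> edges_in G U\<rbrakk>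
        \<Longrightarrow> attr_step G U T \<alpha> A (Z, \<sigma>) (Z, \<sigma>(v \<mapsto> w))"
| tangle: "\<lbrakk>t \<in> T; fst t \<subseteq> U; tw G t = \<alpha>; escapes G U t \<noteq> {}; escapes G U t \<subseteq> Z;
           \<not> fst t \<subseteq> Z\<rbrakk>
        \<Longrightarrow> attr_step G U T \<alpha> A (Z, \<sigma>)
              (Z \<union> fst t, (snd t |` (fst t \<inter> pl G \<alpha>)) ++ \<sigma>)"

definition closed_for :: "('v, 'a) pgame_scheme \<Rightarrow> 'v set \<Rightarrow> nat \<Rightarrow> 'v strat \<Rightarrow> 'v set \<Rightarrow> bool" where
  "closed_for G U \<alpha> \<sigma> X \<longleftrightarrow>
     (\<forall>v \<in> X \<inter> pl G (1 - \<alpha>). succs G U v \<subseteq> X) \<and>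
     (\<forall>v \<in> X \<inter> pl G \<alpha>. \<exists>w. \<sigma> v = Some w \<and> w \<in> X)"

definition YZ :: "('v, 'a) pgame_scheme \<Rightarrow> 'v set \<Rightarrow> nat \<Rightarrow> 'v set \<Rightarrow> 'v strat \<Rightarrow> 'v set" where
  "YZ G U \<alpha> Z \<sigma> = \<Union>{X. X \<subseteq> Z \<and> closed_for G U \<alpha> \<sigma> X}"

definition Hgraph :: "('v, 'a) pgame_scheme \<Rightarrow> 'v set \<Rightarrow> nat \<Rightarrow> 'v set \<Rightarrow> 'v strat \<Rightarrow> ('v \<times> 'v) set" where
  "Hgraph G U \<alpha> Z \<sigma> =
     {(v, w). v \<in> YZ G U \<alpha> Z \<sigma> \<inter> pl G \<alpha> \<and> \<sigma> v = Some w} \<union>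
     {(v, w). v \<in> YZ G U \<alpha> Z \<sigma> \<inter> pl G (1 - \<alpha>) \<and> (v, w) \<in> edges_in G U}"

definition bottom_scc :: "'v set \<Rightarrow> ('v \<times> 'v) set \<Rightarrow> 'v set \<Rightarrow> bool" where
  "bottom_scc Y H C \<longleftrightarrow> C \<noteq> {} \<and> C \<subseteq> Y \<and> (\<forall>u\<in>C. \<forall>w\<in>C. (u, w) \<in> H\<^sup>*) \<and>
     (\<forall>u\<in>C. \<forall>w. (u, w) \<in> H \<longrightarrow> w \<in> C)"

definition extract_tangles :: "('v, 'a) pgame_scheme \<Rightarrow> 'v set \<Rightarrow> nat \<Rightarrow> 'v set \<Rightarrow> 'v strat
    \<Rightarrow> 'v tangle set" where
  "extract_tangles G U \<alpha> Z \<sigma> =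
     {(C, \<sigma> |` C) | C. bottom_scc (YZ G U \<alpha> Z \<sigma>) (Hgraph G U \<alpha> Z \<sigma>) C \<and>
        (\<exists>u\<in>C. \<exists>w\<in>C. (u, w) \<in> Hgraph G U \<alpha> Z \<sigma>)}"

text \<open>Solve-level variables: R (vertex set of the current game), W, S (W_alpha, sigma_alpha),
  T (tangles). Search-level: r (partial map), Y. Attractor-level: Z, sigma. In Attr, d is the
  dominion found by search.\<close>
datatype 'v state =
    Solve "'v set" "nat \<Rightarrow> 'v set" "nat \<Rightarrow> 'v strat" "'v tangle set"
  | Search "'v set" "nat \<Rightarrow> 'v set" "nat \<Rightarrow> 'v strat" "'v tangle set" "'v \<Rightarrow> nat option"
      "'v tangle set"
  | TAttr "'v set" "nat \<Rightarrow> 'v set" "nat \<Rightarrow> 'v strat" "'v tangle set" "'v \<Rightarrow> nat option"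
      "'v tangle set" "'v set" "'v strat"
  | Attr "'v set" "nat \<Rightarrow> 'v set" "nat \<Rightarrow> 'v strat" "'v tangle set" "'v tangle" "'v set"
      "'v strat"
  | Done "nat \<Rightarrow> 'v set" "nat \<Rightarrow> 'v strat"

definition init :: "('v, 'a) pgame_scheme \<Rightarrow> 'v state" where
  "init G = Solve (V G) (\<lambda>_. {}) (\<lambda>_. Map.empty) {}"

inductive alg_step :: "('v, 'a) pgame_scheme \<Rightarrow> 'v state \<Rightarrow> 'v state \<Rightarrow> bool" for G where
  solve_done: "R = {} \<Longrightarrow> alg_step G (Solve R W S T) (Done W S)"
| solve_search: "R \<noteq> {} \<Longrightarrow> alg_step G (Solve R W S T) (Search R W S T Map.empty {})"
| search_iter: "\<lbrakk>\<not> R \<subseteq> dom r; U' = R - dom r; p = prio G U'\<rbrakk>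
    \<Longrightarrow> alg_step G (Search R W S T r Y)
          (TAttr R W S T r Y ({v. pr G v = p} \<inter> U') Map.empty)"
| search_repeat: "R \<subseteq> dom r \<Longrightarrow> alg_step G (Search R W S T r Y) (Search R W S (T \<union> Y) Map.empty {})"
| tattr_step: "\<lbrakk>U' = R - dom r; p = prio G U';
      attr_step G U' T (p mod 2) ({v. pr G v = p} \<inter> U') (Z, \<sigma>) (Z', \<sigma>')\<rbrakk>
    \<Longrightarrow> alg_step G (TAttr R W S T r Y Z \<sigma>) (TAttr R W S T r Y Z' \<sigma>')"
| tattr_dominion: "\<lbrakk>U' = R - dom r; p = prio G U';
      \<not> (\<exists>s. attr_step G U' T (p mod 2) ({v. pr G v = p} \<inter> U') (Z, \<sigma>) s);
      t \<in> extract_tangles G U' (p mod 2) Z \<sigma>; escapes G R t = {}\<rbrakk>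
    \<Longrightarrow> alg_step G (TAttr R W S T r Y Z \<sigma>) (Attr R W S (T \<union> Y) t (fst t) Map.empty)"
| tattr_next: "\<lbrakk>U' = R - dom r; p = prio G U';
      \<not> (\<exists>s. attr_step G U' T (p mod 2) ({v. pr G v = p} \<inter> U') (Z, \<sigma>) s);
      \<forall>t \<in> extract_tangles G U' (p mod 2) Z \<sigma>. escapes G R t \<noteq> {}\<rbrakk>
    \<Longrightarrow> alg_step G (TAttr R W S T r Y Z \<sigma>)
          (Search R W S T (\<lambda>v. if v \<in> Z then Some p else r v)
             (Y \<union> extract_tangles G U' (p mod 2) Z \<sigma>))"
| attr_step: "attr_step G R {} (tw G d) (fst d) (Z, \<sigma>) (Z', \<sigma>')
    \<Longrightarrow> alg_step G (Attr R W S T d Z \<sigma>) (Attr R W S T d Z' \<sigma>')"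
| attr_done: "\<lbrakk>\<not> (\<exists>s. attr_step G R {} (tw G d) (fst d) (Z, \<sigma>) s); \<alpha> = tw G d\<rbrakk>
    \<Longrightarrow> alg_step G (Attr R W S T d Z \<sigma>)
          (Solve (R - Z) (W(\<alpha> := W \<alpha> \<union> Z)) (S(\<alpha> := S \<alpha> ++ \<sigma> ++ snd d))
             {t \<in> T. fst t \<subseteq> R - Z})"

end

theory Submission
  imports Defs
begin

lemma pg_E: "parity_game G \<Longrightarrow> (u, w) \<in> E G \<Longrightarrow> u \<in> V G \<and> w \<in> V G"
  by (auto simp: parity_game_def)

lemma pl_cases: "\<alpha> < 2 \<Longrightarrow> u \<in> V G \<Longrightarrow> u \<in> pl G \<alpha> \<or> u \<in> pl G (1 - \<alpha>)"
  by (cases "\<alpha> = 0") (auto simp: pl_def V_def)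

lemma pl_disj: "parity_game G \<Longrightarrow> \<alpha> < 2 \<Longrightarrow> u \<in> pl G \<alpha> \<Longrightarrow> u \<in> pl G (1 - \<alpha>) \<Longrightarrow> False"
  by (cases "\<alpha> = 0") (auto simp: pl_def parity_game_def)

lemma pl_V: "pl G \<alpha> \<subseteq> V G"
  by (auto simp: pl_def V_def)

lemma tw_lt: "tw G t < 2"
  by (simp add: tw_def)

definition lerel :: "('v, 'a) pgame_scheme \<Rightarrow> ('v \<times> 'v) set \<Rightarrow> 'v \<Rightarrow> ('v \<times> 'v) set" where
  "lerel G H v = {(a, b). (a, b) \<in> H \<and> pr G a \<le> pr G v \<and> pr G b \<le> pr G v}"

definition cw_win :: "('v, 'a) pgame_scheme \<Rightarrow> ('v \<times> 'v) set \<Rightarrow> nat \<Rightarrow> bool" where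
  "cw_win G H \<alpha> \<longleftrightarrow> (\<forall>v. (v, v) \<in> (lerel G H v)\<^sup>+ \<longrightarrow> pr G v mod 2 = \<alpha>)"

lemma cw_win_mono: "H \<subseteq> H' \<Longrightarrow> cw_win G H' \<alpha> \<Longrightarrow> cw_win G H \<alpha>"
proof -
  assume a: "H \<subseteq> H'" "cw_win G H' \<alpha>"
  have "lerel G H v \<subseteq> lerel G H' v" for v using a(1) by (auto simp: lerel_def)
  then show ?thesis using a(2) unfolding cw_win_def by (meson subsetD trancl_mono)
qed

lemma cw_win_empty: "cw_win G {} \<alpha>"
  by (simp add: cw_win_def lerel_def)

lemma TL1:
  assumes "P \<subseteq> X \<times> X" "Q \<subseteq> (- X) \<times> UNIV" "(x, y) \<in> (P \<union> Q)\<^sup>+" "x \<in> X"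
  shows "(x, y) \<in> P\<^sup>+"
  using assms(3,4)
proof (induction rule: trancl_induct)
  case (base y) then show ?case using assms(2) by auto
next
  case (step y z)
  have "(x, y) \<in> P\<^sup>+" using step by blast
  then have "y \<in> Range P" by (metis Range.intros trancl_range)
  then have "y \<in> X" using assms(1) by auto
  then have "(y, z) \<in> P" using step assms(2) by auto
  then show ?case using \<open>(x, y) \<in> P\<^sup>+\<close> by auto
qed

lemma TL2:
  assumes "P \<subseteq> X \<times> X" "Q \<subseteq> (- X) \<times> UNIV" "(x, y) \<in> (P \<union> Q)\<^sup>+" "y \<notin> X"
  shows "(x, y) \<in> (Q \<inter> (- X) \<times> (- X))\<^sup>+"
  using assms(3,4)
proof (induction rule: trancl_induct)
  case (base y) then show ?case using assms(1,2) by auto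
next
  case (step y z)
  then have "(y, z) \<in> Q" using assms(1) by auto
  then have "y \<notin> X" using assms(2) by auto
  have "(y, z) \<in> Q \<inter> (- X) \<times> (- X)" using \<open>(y, z) \<in> Q\<close> \<open>y \<notin> X\<close> step(4) by auto
  moreover have "(x, y) \<in> (Q \<inter> (- X) \<times> (- X))\<^sup>+" using step(3) \<open>y \<notin> X\<close> by blast
  ultimately show ?case by (meson trancl_into_trancl)
qed

lemma L_ext:
  assumes "H0 \<subseteq> X \<times> X" "cw_win G H0 \<alpha>" "H \<inter> (X \<times> UNIV) \<subseteq> H0"
    "cw_win G (H \<inter> (- X) \<times> (- X)) \<alpha>"
  shows "cw_win G H \<alpha>"
  unfolding cw_win_def
proof (intro allI impI)
  fix v assume v: "(v, v) \<in> (lerel G H v)\<^sup>+"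
  let ?P = "lerel G H v \<inter> (X \<times> UNIV)" and ?Q = "lerel G H v \<inter> ((- X) \<times> UNIV)"
  have e: "lerel G H v = ?P \<union> ?Q" by auto
  have P: "?P \<subseteq> lerel G H0 v" using assms(3) by (auto simp: lerel_def)
  have PX: "?P \<subseteq> X \<times> X" using P assms(1) by (auto simp: lerel_def)
  have v2: "(v, v) \<in> (?P \<union> ?Q)\<^sup>+" using v e by simp
  show "pr G v mod 2 = \<alpha>"
  proof (cases "v \<in> X")
    case True
    have "(v, v) \<in> ?P\<^sup>+" by (rule TL1[OF PX _ v2 True]) auto
    then have "(v, v) \<in> (lerel G H0 v)\<^sup>+" using P trancl_mono by blast
    then show ?thesis using assms(2) by (auto simp: cw_win_def)
  next
    case False
    have "(v, v) \<in> (?Q \<inter> (- X) \<times> (- X))\<^sup>+" by (rule TL2[OF PX _ v2 False]) auto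
    moreover have "?Q \<inter> (- X) \<times> (- X) \<subseteq> lerel G (H \<inter> (- X) \<times> (- X)) v"
      by (auto simp: lerel_def)
    ultimately have "(v, v) \<in> (lerel G (H \<inter> (- X) \<times> (- X)) v)\<^sup>+" using trancl_mono by blast
    then show ?thesis using assms(4) by (auto simp: cw_win_def)
  qed
qed

lemma TL3:
  assumes "(x, y) \<in> K\<^sup>+"
  shows "(x, y) \<in> (K \<inter> (- A) \<times> UNIV)\<^sup>+ \<or> (\<exists>a\<in>A. \<exists>b. (a, b) \<in> K)"
  using assms
proof (induction rule: trancl_induct)
  case (base y) then show ?case by auto
next
  case (step y z)
  then show ?case
    by (cases "y \<in> A") (auto intro: trancl_into_trancl)
qed

lemma L_top:
  assumes "cw_win G (H \<inter> (- A) \<times> UNIV) \<alpha>" "\<forall>(a, b) \<in> H. pr G a \<le> p"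
    "\<forall>a\<in>A. pr G a = p" "p mod 2 = \<alpha>"
  shows "cw_win G H \<alpha>"
  unfolding cw_win_def
proof (intro allI impI)
  fix v assume v: "(v, v) \<in> (lerel G H v)\<^sup>+"
  from TL3[OF v, of A] show "pr G v mod 2 = \<alpha>"
  proof
    assume "(v, v) \<in> (lerel G H v \<inter> (- A) \<times> UNIV)\<^sup>+"
    moreover have "lerel G H v \<inter> (- A) \<times> UNIV \<subseteq> lerel G (H \<inter> (- A) \<times> UNIV) v"
      by (auto simp: lerel_def)
    ultimately have "(v, v) \<in> (lerel G (H \<inter> (- A) \<times> UNIV) v)\<^sup>+" using trancl_mono by blast
    then show ?thesis using assms(1) by (auto simp: cw_win_def)
  next
    assume "\<exists>a\<in>A. \<exists>b. (a, b) \<in> lerel G H v"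
    then obtain a b where ab: "a \<in> A" "(a, b) \<in> lerel G H v" by blast
    obtain w where "(v, w) \<in> lerel G H v" using v by (meson tranclD)
    then have "pr G v \<le> p" using assms(2) by (auto simp: lerel_def)
    moreover have "pr G a \<le> pr G v" "pr G a = p" using ab assms(3) by (auto simp: lerel_def)
    ultimately show ?thesis using assms(4) by simp
  qed
qed



definition tg :: "('v, 'a) pgame_scheme \<Rightarrow> 'v tangle \<Rightarrow> ('v \<times> 'v) set" where
  "tg G t = {(u, w). u \<in> fst t \<and> w \<in> fst t \<and> ((u \<in> pl G (tw G t) \<and> snd t u = Some w)
     \<or> (u \<in> pl G (1 - tw G t) \<and> (u, w) \<in> E G))}"

definition good_tangle :: "('v, 'a) pgame_scheme \<Rightarrow> 'v tangle \<Rightarrow> bool" where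
  "good_tangle G t \<longleftrightarrow> fst t \<noteq> {} \<and> fst t \<subseteq> V G \<and> dom (snd t) \<subseteq> fst t \<inter> pl G (tw G t) \<and>
     (\<forall>u w. snd t u = Some w \<longrightarrow> (u, w) \<in> E G \<and> w \<in> fst t) \<and>
     (\<forall>u \<in> fst t \<inter> pl G (tw G t). snd t u \<noteq> None) \<and> cw_win G (tg G t) (tw G t)"

definition Hn :: "('v, 'a) pgame_scheme \<Rightarrow> 'v set \<Rightarrow> nat \<Rightarrow> 'v set \<Rightarrow> 'v set \<Rightarrow> 'v strat
    \<Rightarrow> ('v \<times> 'v) set" where
  "Hn G U \<alpha> A Z \<sigma> = {(u, w). u \<in> Z \<and> u \<notin> A \<and> ((u \<in> pl G \<alpha> \<and> \<sigma> u = Some w)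
     \<or> (u \<in> pl G (1 - \<alpha>) \<and> (u, w) \<in> edges_in G U))}"

definition attr_inv :: "('v, 'a) pgame_scheme \<Rightarrow> 'v set \<Rightarrow> nat \<Rightarrow> 'v set \<Rightarrow> 'v set \<Rightarrow> 'v strat
    \<Rightarrow> bool" where
  "attr_inv G U \<alpha> A Z \<sigma> \<longleftrightarrow> A \<subseteq> Z \<and> Z \<subseteq> U \<and> dom \<sigma> \<subseteq> Z \<inter> pl G \<alpha> \<and>
     (\<forall>u w. \<sigma> u = Some w \<longrightarrow> (u, w) \<in> edges_in G U \<and> w \<in> Z) \<and>
     (\<forall>u \<in> (Z - A) \<inter> pl G \<alpha>. \<sigma> u \<noteq> None) \<and>
     (\<forall>u \<in> (Z - A) \<inter> pl G (1 - \<alpha>). succs G U u \<subseteq> Z) \<and>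
     cw_win G (Hn G U \<alpha> A Z \<sigma>) \<alpha>"

lemma attr_inv_init: "A \<subseteq> U \<Longrightarrow> attr_inv G U \<alpha> A A Map.empty"
proof -
  have "Hn G U \<alpha> A A Map.empty = {}" by (auto simp: Hn_def)
  then show "A \<subseteq> U \<Longrightarrow> attr_inv G U \<alpha> A A Map.empty" by (auto simp: attr_inv_def cw_win_empty)
qed

lemma Hn_sub: "attr_inv G U \<alpha> A Z \<sigma> \<Longrightarrow> Hn G U \<alpha> A Z \<sigma> \<subseteq> Z \<times> Z"
  by (auto simp: attr_inv_def Hn_def succs_def)

lemma cw_win_ext:
  assumes "attr_inv G U \<alpha> A Z \<sigma>" "Hn G U \<alpha> A Z' \<sigma>' \<inter> (Z \<times> UNIV) \<subseteq> Hn G U \<alpha> A Z \<sigma>"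
    "cw_win G (Hn G U \<alpha> A Z' \<sigma>' \<inter> (- Z) \<times> (- Z)) \<alpha>"
  shows "cw_win G (Hn G U \<alpha> A Z' \<sigma>') \<alpha>"
  by (rule L_ext[OF Hn_sub[OF assms(1)] _ assms(2,3)]) (use assms(1) in \<open>simp add: attr_inv_def\<close>)

lemma attr_inv_step:
  assumes st: "attr_step G U T \<alpha> A (Z, \<sigma>) (Z', \<sigma>')" and inv: "attr_inv G U \<alpha> A Z \<sigma>"
    and gt: "\<forall>t\<in>T. good_tangle G t" and pg: "parity_game G" and al: "\<alpha> < 2"
  shows "attr_inv G U \<alpha> A Z' \<sigma>' \<and> Z \<subseteq> Z' \<and> dom \<sigma> \<subseteq> dom \<sigma>' \<and> (Z \<noteq> Z' \<or> dom \<sigma> \<noteq> dom \<sigma>')"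
  using st
proof (cases rule: attr_step.cases)
  case (own v w)
  have cw: "cw_win G (Hn G U \<alpha> A Z' \<sigma>') \<alpha>"
  proof (rule cw_win_ext[OF inv])
    show "Hn G U \<alpha> A Z' \<sigma>' \<inter> Z \<times> UNIV \<subseteq> Hn G U \<alpha> A Z \<sigma>"
      using own by (auto simp: Hn_def split: if_splits)
    have "Hn G U \<alpha> A Z' \<sigma>' \<inter> (- Z) \<times> (- Z) = {}"
      using own pl_disj[OF pg al] by (auto simp: Hn_def)
    then show "cw_win G (Hn G U \<alpha> A Z' \<sigma>' \<inter> (- Z) \<times> (- Z)) \<alpha>" by (simp add: cw_win_empty)
  qed
  show ?thesis using own inv cw pl_disj[OF pg al]
    by (auto simp: attr_inv_def succs_def)
next
  case (opp v)
  have cw: "cw_win G (Hn G U \<alpha> A Z' \<sigma>') \<alpha>"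
  proof (rule cw_win_ext[OF inv])
    show "Hn G U \<alpha> A Z' \<sigma>' \<inter> Z \<times> UNIV \<subseteq> Hn G U \<alpha> A Z \<sigma>"
      using opp by (auto simp: Hn_def)
    have "Hn G U \<alpha> A Z' \<sigma>' \<inter> (- Z) \<times> (- Z) = {}"
      using opp inv pl_disj[OF pg al] by (auto simp: Hn_def attr_inv_def succs_def)
    then show "cw_win G (Hn G U \<alpha> A Z' \<sigma>' \<inter> (- Z) \<times> (- Z)) \<alpha>" by (simp add: cw_win_empty)
  qed
  show ?thesis using opp inv cw pl_disj[OF pg al]
    by (auto simp: attr_inv_def succs_def)
next
  case (target v w)
  have "Hn G U \<alpha> A Z' \<sigma>' = Hn G U \<alpha> A Z \<sigma>" using target by (auto simp: Hn_def split: if_splits)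
  moreover have "v \<notin> dom \<sigma>" using target by auto
  ultimately show ?thesis using target inv by (auto simp: attr_inv_def)
next
  case (tangle t)
  have g: "good_tangle G t" using gt tangle by auto
  have tw: "tw G t = \<alpha>" using tangle by simp
  have g1: "fst t \<noteq> {}" "fst t \<subseteq> V G" "dom (snd t) \<subseteq> fst t \<inter> pl G \<alpha>"
    "\<And>u w. snd t u = Some w \<Longrightarrow> (u, w) \<in> E G \<and> w \<in> fst t"
    "\<And>u. u \<in> fst t \<Longrightarrow> u \<in> pl G \<alpha> \<Longrightarrow> snd t u \<noteq> None" "cw_win G (tg G t) \<alpha>"
    using g tw unfolding good_tangle_def by auto
  have i: "A \<subseteq> Z" "Z \<subseteq> U" "dom \<sigma> \<subseteq> Z \<inter> pl G \<alpha>"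
    "\<And>u w. \<sigma> u = Some w \<Longrightarrow> (u, w) \<in> edges_in G U \<and> w \<in> Z"
    "\<And>u. u \<in> Z - A \<Longrightarrow> u \<in> pl G \<alpha> \<Longrightarrow> \<sigma> u \<noteq> None"
    "\<And>u. u \<in> Z - A \<Longrightarrow> u \<in> pl G (1 - \<alpha>) \<Longrightarrow> succs G U u \<subseteq> Z"
    using inv unfolding attr_inv_def by auto
  have s1: "\<sigma>' u = Some w \<longleftrightarrow> (\<sigma> u = Some w \<or> (\<sigma> u = None \<and> u \<in> fst t \<and> u \<in> pl G \<alpha> \<and> snd t u = Some w))"
    for u w using tangle by (auto simp: map_add_Some_iff restrict_map_def)
  have s2: "u \<in> Z \<Longrightarrow> u \<notin> A \<Longrightarrow> u \<in> pl G \<alpha> \<Longrightarrow> \<sigma>' u = \<sigma> u" for u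
    using i(5)[of u] tangle by (auto simp: map_add_def split: option.splits)
  have a1: "A \<subseteq> Z'" "Z' \<subseteq> U" using i tangle by auto
  have a2: "dom \<sigma>' \<subseteq> Z' \<inter> pl G \<alpha>" using i(3) tangle by auto
  have a3: "\<forall>u w. \<sigma>' u = Some w \<longrightarrow> (u, w) \<in> edges_in G U \<and> w \<in> Z'"
  proof (intro allI impI)
    fix u w assume "\<sigma>' u = Some w"
    then consider "\<sigma> u = Some w" | "u \<in> fst t" "snd t u = Some w" using s1 by blast
    then show "(u, w) \<in> edges_in G U \<and> w \<in> Z'"
    proof cases
      case 1 then show ?thesis using i(4) tangle by auto
    next
      case 2 then show ?thesis using g1(4)[of u w] tangle by (auto simp: edges_in_def)
    qed
  qed
  have a4: "\<forall>u \<in> (Z' - A) \<inter> pl G \<alpha>. \<sigma>' u \<noteq> None"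
  proof
    fix u assume u: "u \<in> (Z' - A) \<inter> pl G \<alpha>"
    show "\<sigma>' u \<noteq> None"
    proof (cases "u \<in> Z")
      case True then show ?thesis using s2 u i(5) by auto
    next
      case False
      then have "\<sigma> u = None" using i(3) by auto
      moreover obtain w where "snd t u = Some w" using g1(5)[of u] u False tangle by auto
      ultimately show ?thesis using s1[of u w] u False tangle by auto
    qed
  qed
  have a5: "\<forall>u \<in> (Z' - A) \<inter> pl G (1 - \<alpha>). succs G U u \<subseteq> Z'"
  proof
    fix u assume u: "u \<in> (Z' - A) \<inter> pl G (1 - \<alpha>)"
    show "succs G U u \<subseteq> Z'"
    proof (cases "u \<in> Z")
      case True then show ?thesis using i(6)[of u] u tangle by auto
    next
      case False
      then have "u \<in> fst t" using u tangle by auto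
      show ?thesis
      proof
        fix x assume x: "x \<in> succs G U u"
        show "x \<in> Z'"
        proof (cases "x \<in> fst t")
          case False
          then have "x \<in> escapes G U t" using x u \<open>u \<in> fst t\<close> tw
            by (auto simp: escapes_def succs_def)
          then show ?thesis using tangle by auto
        qed (use tangle in auto)
      qed
    qed
  qed
  have cw: "cw_win G (Hn G U \<alpha> A Z' \<sigma>') \<alpha>"
  proof (rule cw_win_ext[OF inv])
    show "Hn G U \<alpha> A Z' \<sigma>' \<inter> Z \<times> UNIV \<subseteq> Hn G U \<alpha> A Z \<sigma>"
      using s2 by (auto simp: Hn_def)
    have "Hn G U \<alpha> A Z' \<sigma>' \<inter> (- Z) \<times> (- Z) \<subseteq> tg G t"
    proof
      fix x assume x: "x \<in> Hn G U \<alpha> A Z' \<sigma>' \<inter> (- Z) \<times> (- Z)"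
      then obtain u w where uw0: "x = (u, w)" "u \<notin> Z" "w \<notin> Z" "(u, w) \<in> Hn G U \<alpha> A Z' \<sigma>'"
        by auto
      have "w \<in> Z'" using uw0(4) a3 a5 by (auto simp: Hn_def succs_def)
      then have uw: "x = (u, w)" "u \<in> fst t" "w \<in> fst t" "u \<notin> Z"
        using uw0 tangle by (auto simp: Hn_def)
      have "\<sigma> u = None" using uw(4) i(3) by auto
      then show "x \<in> tg G t" using x uw s1[of u] tw by (auto simp: Hn_def tg_def edges_in_def)
    qed
    then show "cw_win G (Hn G U \<alpha> A Z' \<sigma>' \<inter> (- Z) \<times> (- Z)) \<alpha>"
      using cw_win_mono g1(6) by blast
  qed
  have "Z \<noteq> Z'" using tangle by auto
  moreover have "dom \<sigma> \<subseteq> dom \<sigma>'" using tangle by auto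
  ultimately show ?thesis using a1 a2 a3 a4 a5 cw tangle by (simp add: attr_inv_def)
qed



lemma YZ_closed: "closed_for G U \<alpha> \<sigma> (YZ G U \<alpha> Z \<sigma>)"
proof -
  have 1: "\<forall>v \<in> YZ G U \<alpha> Z \<sigma> \<inter> pl G (1 - \<alpha>). succs G U v \<subseteq> YZ G U \<alpha> Z \<sigma>"
    unfolding YZ_def closed_for_def by blast
  have 2: "\<forall>v \<in> YZ G U \<alpha> Z \<sigma> \<inter> pl G \<alpha>. \<exists>w. \<sigma> v = Some w \<and> w \<in> YZ G U \<alpha> Z \<sigma>"
    unfolding YZ_def closed_for_def by blast
  show ?thesis using 1 2 unfolding closed_for_def by blast
qed

lemma YZ_sub: "YZ G U \<alpha> Z \<sigma> \<subseteq> Z"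
  by (auto simp: YZ_def)

lemma YZ_greatest: "X \<subseteq> Z \<Longrightarrow> closed_for G U \<alpha> \<sigma> X \<Longrightarrow> X \<subseteq> YZ G U \<alpha> Z \<sigma>"
  by (auto simp: YZ_def)

lemma Hgraph_sub: "Hgraph G U \<alpha> Z \<sigma> \<subseteq> YZ G U \<alpha> Z \<sigma> \<times> YZ G U \<alpha> Z \<sigma>"
proof
  fix x assume x: "x \<in> Hgraph G U \<alpha> Z \<sigma>"
  have c: "closed_for G U \<alpha> \<sigma> (YZ G U \<alpha> Z \<sigma>)" by (rule YZ_closed)
  from x obtain a b where ab: "x = (a, b)" "a \<in> YZ G U \<alpha> Z \<sigma>"
    "(a \<in> pl G \<alpha> \<and> \<sigma> a = Some b) \<or> (a \<in> pl G (1 - \<alpha>) \<and> (a, b) \<in> edges_in G U)"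
    by (auto simp: Hgraph_def)
  from ab(3) have "b \<in> YZ G U \<alpha> Z \<sigma>"
  proof
    assume "a \<in> pl G \<alpha> \<and> \<sigma> a = Some b"
    then have "a \<in> YZ G U \<alpha> Z \<sigma> \<inter> pl G \<alpha>" "\<sigma> a = Some b" using ab(2) by auto
    then obtain w where "\<sigma> a = Some w" "w \<in> YZ G U \<alpha> Z \<sigma>" using c unfolding closed_for_def by blast
    then show ?thesis using \<open>\<sigma> a = Some b\<close> by simp
  next
    assume "a \<in> pl G (1 - \<alpha>) \<and> (a, b) \<in> edges_in G U"
    then show ?thesis using c ab(2) unfolding closed_for_def succs_def by blast
  qed
  then show "x \<in> YZ G U \<alpha> Z \<sigma> \<times> YZ G U \<alpha> Z \<sigma>" using ab by auto
qed

lemma bscc_path: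
  assumes "bottom_scc Y H C" "(x, y) \<in> H\<^sup>*" "x \<in> C"
  shows "(x, y) \<in> (H \<inter> C \<times> C)\<^sup>* \<and> y \<in> C"
  using assms(2,3)
proof (induction rule: rtrancl_induct)
  case base then show ?case by auto
next
  case (step y z)
  then have "z \<in> C" using assms(1) by (auto simp: bottom_scc_def)
  have "(y, z) \<in> H \<inter> C \<times> C" using step \<open>z \<in> C\<close> by auto
  then show ?case using step \<open>z \<in> C\<close> by (meson rtrancl.rtrancl_into_rtrancl)
qed

definition Hall :: "('v, 'a) pgame_scheme \<Rightarrow> 'v set \<Rightarrow> nat \<Rightarrow> 'v set \<Rightarrow> 'v strat
    \<Rightarrow> ('v \<times> 'v) set" where
  "Hall G U \<alpha> Z \<sigma> = {(u, w). u \<in> Z \<and> ((u \<in> pl G \<alpha> \<and> \<sigma> u = Some w)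
     \<or> (u \<in> pl G (1 - \<alpha>) \<and> (u, w) \<in> edges_in G U))}"

lemma Hall_win:
  assumes inv: "attr_inv G U \<alpha> A Z \<sigma>" and fin: "finite U"
    and A: "A = {v. pr G v = p} \<inter> U" and p: "p = prio G U" and al: "\<alpha> = p mod 2"
  shows "cw_win G (Hall G U \<alpha> Z \<sigma>) \<alpha>"
proof (rule L_top[where A = A and p = p])
  have "Hall G U \<alpha> Z \<sigma> \<inter> (- A) \<times> UNIV = Hn G U \<alpha> A Z \<sigma>" by (auto simp: Hall_def Hn_def)
  then show "cw_win G (Hall G U \<alpha> Z \<sigma> \<inter> (- A) \<times> UNIV) \<alpha>" using inv by (simp add: attr_inv_def)
  have ZU: "Z \<subseteq> U" using inv by (simp add: attr_inv_def)
  show "\<forall>(a, b)\<in>Hall G U \<alpha> Z \<sigma>. pr G a \<le> p"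
  proof (intro ballI, clarify)
    fix a b assume "(a, b) \<in> Hall G U \<alpha> Z \<sigma>"
    then have "a \<in> U" using ZU by (auto simp: Hall_def)
    then show "pr G a \<le> p" unfolding p prio_def using fin by simp
  qed
  show "\<forall>a\<in>A. pr G a = p" using A by auto
  show "p mod 2 = \<alpha>" using al by simp
qed

lemma extract_good:
  assumes inv: "attr_inv G U \<alpha> A Z \<sigma>" and pg: "parity_game G" and UV: "U \<subseteq> V G"
    and A: "A = {v. pr G v = p} \<inter> U" and p: "p = prio G U" and al: "\<alpha> = p mod 2"
    and t: "t \<in> extract_tangles G U \<alpha> Z \<sigma>"
  shows "good_tangle G t \<and> tw G t = \<alpha>"
proof -
  let ?Y = "YZ G U \<alpha> Z \<sigma>" and ?H = "Hgraph G U \<alpha> Z \<sigma>"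
  obtain C where t: "t = (C, \<sigma> |` C)" and bs: "bottom_scc ?Y ?H C"
    and ed: "\<exists>u\<in>C. \<exists>w\<in>C. (u, w) \<in> ?H"
    using t by (auto simp: extract_tangles_def)
  have finV: "finite (V G)" using pg by (simp add: parity_game_def)
  have fin: "finite U" using UV finV finite_subset by blast
  have ZU: "Z \<subseteq> U" and dsig: "dom \<sigma> \<subseteq> pl G \<alpha>"
    and sigE: "\<And>u w. \<sigma> u = Some w \<Longrightarrow> (u, w) \<in> edges_in G U"
    using inv by (auto simp: attr_inv_def)
  have CY: "C \<subseteq> ?Y" "C \<noteq> {}" using bs unfolding bottom_scc_def by simp_all
  have CU: "C \<subseteq> U" using CY(1) YZ_sub[of G U \<alpha> Z \<sigma>] ZU by (meson subset_trans)
  have finC: "finite C" using CU fin finite_subset by blast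
  let ?HC = "?H \<inter> C \<times> C"
  have HHall: "?H \<subseteq> Hall G U \<alpha> Z \<sigma>"
  proof
    fix x assume "x \<in> ?H"
    then obtain a b where ab: "x = (a, b)" "a \<in> ?Y"
      "(a \<in> pl G \<alpha> \<and> \<sigma> a = Some b) \<or> (a \<in> pl G (1 - \<alpha>) \<and> (a, b) \<in> edges_in G U)"
      unfolding Hgraph_def by blast
    then show "x \<in> Hall G U \<alpha> Z \<sigma>" using YZ_sub[of G U \<alpha> Z \<sigma>] unfolding Hall_def by blast
  qed
  have cwHC: "cw_win G ?HC \<alpha>"
    by (rule cw_win_mono[OF _ Hall_win[OF inv fin A p al]]) (use HHall in blast)
  obtain m where m: "m \<in> C" "pr G m = Max ((pr G) ` C)"
  proof -
    have "Max ((pr G) ` C) \<in> (pr G) ` C" using finC CY(2) by (intro Max_in) auto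
    then show ?thesis using that by auto
  qed
  have mle: "\<And>x. x \<in> C \<Longrightarrow> pr G x \<le> pr G m" using m finC by simp
  obtain u w where uw: "u \<in> C" "w \<in> C" "(u, w) \<in> ?H" using ed by blast
  have "(m, u) \<in> ?H\<^sup>*" "(w, m) \<in> ?H\<^sup>*" using bs uw(1,2) m(1) unfolding bottom_scc_def by blast+
  then have "(m, u) \<in> ?HC\<^sup>*" "(w, m) \<in> ?HC\<^sup>*" using bscc_path[OF bs] uw m by blast+
  moreover have "(u, w) \<in> ?HC" using uw by auto
  ultimately have "(m, m) \<in> ?HC\<^sup>+" by (meson rtrancl_into_trancl1 trancl_rtrancl_trancl)
  moreover have "lerel G ?HC m = ?HC" using mle by (auto simp: lerel_def)
  ultimately have "pr G m mod 2 = \<alpha>" using cwHC by (metis cw_win_def)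
  then have tw: "tw G t = \<alpha>" using m t by (simp add: tw_def prio_def)
  have closedY: "closed_for G U \<alpha> \<sigma> ?Y" by (rule YZ_closed)
  have g1: "dom (snd t) \<subseteq> fst t \<inter> pl G (tw G t)" using t tw dsig by auto
  have g2: "\<forall>u w. snd t u = Some w \<longrightarrow> (u, w) \<in> E G \<and> w \<in> fst t"
  proof (intro allI impI)
    fix u w assume a: "snd t u = Some w"
    then have u: "u \<in> C" "\<sigma> u = Some w" using t by (auto simp: restrict_map_def split: if_splits)
    then have "u \<in> pl G \<alpha>" using dsig by auto
    then have "(u, w) \<in> ?H" using u CY by (auto simp: Hgraph_def)
    then have "w \<in> C" using bs u by (auto simp: bottom_scc_def)
    then show "(u, w) \<in> E G \<and> w \<in> fst t" using sigE[OF u(2)] t by (auto simp: edges_in_def)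
  qed
  have g3: "\<forall>u \<in> fst t \<inter> pl G (tw G t). snd t u \<noteq> None"
    using closedY CY t tw by (auto simp: closed_for_def)
  have "tg G t \<subseteq> ?HC"
  proof
    fix x assume "x \<in> tg G t"
    then obtain a b where ab: "x = (a, b)" "a \<in> C" "b \<in> C"
      "(a \<in> pl G \<alpha> \<and> \<sigma> a = Some b) \<or> (a \<in> pl G (1 - \<alpha>) \<and> (a, b) \<in> E G)"
      using t tw by (auto simp: tg_def)
    then show "x \<in> ?HC" using CY CU by (auto simp: Hgraph_def edges_in_def)
  qed
  then have g4: "cw_win G (tg G t) (tw G t)" using cwHC tw cw_win_mono by metis
  have "fst t \<noteq> {}" "fst t \<subseteq> V G" using CY CU UV t by auto
  then show ?thesis using g1 g2 g3 g4 tw by (simp add: good_tangle_def)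
qed



lemma bscc_exists:
  assumes fin: "finite Y" and HY: "H \<subseteq> Y \<times> Y" and ne: "Y \<noteq> {}"
    and out: "\<forall>v\<in>Y. \<exists>w. (v, w) \<in> H"
  shows "\<exists>C. bottom_scc Y H C \<and> (\<exists>u\<in>C. \<exists>w\<in>C. (u, w) \<in> H)"
proof -
  define reach where "reach x = {y. (x, y) \<in> H\<^sup>*}" for x
  have rY: "x \<in> Y \<Longrightarrow> reach x \<subseteq> Y" for x
  proof
    fix y assume "x \<in> Y" "y \<in> reach x"
    then have "(x, y) \<in> H\<^sup>*" by (simp add: reach_def)
    then show "y \<in> Y" using \<open>x \<in> Y\<close> HY by (induction rule: rtrancl_induct) auto
  qed
  obtain x0 where "x0 \<in> Y" using ne by blast
  obtain v where v: "v \<in> Y" and vmin: "\<And>u. u \<in> Y \<Longrightarrow> card (reach v) \<le> card (reach u)"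
    using ex_has_least_nat[of "\<lambda>x. x \<in> Y" x0 "\<lambda>x. card (reach x)"] \<open>x0 \<in> Y\<close> by blast
  let ?C = "reach v"
  have bk: "(u, v) \<in> H\<^sup>*" if hu: "u \<in> ?C" for u
  proof -
    have uY: "u \<in> Y" using rY[OF v] hu by blast
    have sub: "reach u \<subseteq> reach v" using hu by (auto simp: reach_def)
    have "finite (reach v)" using rY[OF v] fin finite_subset by blast
    then have "reach u = reach v" using sub vmin[OF uY] by (meson card_seteq)
    moreover have "v \<in> reach v" by (simp add: reach_def)
    ultimately have "v \<in> reach u" by simp
    then show ?thesis by (simp add: reach_def)
  qed
  have "bottom_scc Y H ?C"
    unfolding bottom_scc_def
  proof (intro conjI ballI allI impI)
    have "v \<in> ?C" by (simp add: reach_def)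
    then show "?C \<noteq> {}" by blast
    show "?C \<subseteq> Y" by (rule rY[OF v])
  next
    fix u w assume a: "u \<in> ?C" "w \<in> ?C"
    have "(u, v) \<in> H\<^sup>*" using bk[OF a(1)] .
    moreover have "(v, w) \<in> H\<^sup>*" using a(2) by (simp add: reach_def)
    ultimately show "(u, w) \<in> H\<^sup>*" by (rule rtrancl_trans)
  next
    fix u w assume a: "u \<in> ?C" "(u, w) \<in> H"
    have "(v, u) \<in> H\<^sup>*" using a(1) by (simp add: reach_def)
    then have "(v, w) \<in> H\<^sup>*" using a(2) by (rule rtrancl_into_rtrancl)
    then show "w \<in> ?C" by (simp add: reach_def)
  qed
  moreover obtain w where "(v, w) \<in> H" using out v by blast
  moreover then have "w \<in> ?C" "v \<in> ?C" by (simp_all add: reach_def)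
  ultimately show ?thesis by blast
qed

lemma extract_no_escape:
  assumes "t \<in> extract_tangles G U \<alpha> Z \<sigma>" "tw G t = \<alpha>"
  shows "escapes G U t = {}"
proof -
  obtain C where t: "t = (C, \<sigma> |` C)" and bs: "bottom_scc (YZ G U \<alpha> Z \<sigma>) (Hgraph G U \<alpha> Z \<sigma>) C"
    using assms(1) by (auto simp: extract_tangles_def)
  have CY: "C \<subseteq> YZ G U \<alpha> Z \<sigma>" using bs unfolding bottom_scc_def by simp
  show ?thesis
  proof (rule ccontr)
    assume "escapes G U t \<noteq> {}"
    then obtain v u where "v \<notin> C" "u \<in> C" "u \<in> pl G (1 - \<alpha>)" "(u, v) \<in> edges_in G U"
      using t assms(2) by (auto simp: escapes_def)
    moreover then have "(u, v) \<in> Hgraph G U \<alpha> Z \<sigma>" using CY by (auto simp: Hgraph_def)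
    ultimately show False using bs unfolding bottom_scc_def by blast
  qed
qed

lemma escapes_sub:
  assumes "fst t \<subseteq> U" "U \<subseteq> R"
  shows "escapes G U t = escapes G R t \<inter> U"
  using assms by (auto simp: escapes_def edges_in_def)

lemma extract_nonempty:
  assumes inv: "attr_inv G U \<alpha> A U \<sigma>" and pg: "parity_game G" and UV: "U \<subseteq> V G"
    and ne: "U \<noteq> {}" and tot: "\<forall>v\<in>U. \<exists>w\<in>U. (v, w) \<in> E G" and al: "\<alpha> < 2"
    and nost: "\<not> (\<exists>s. attr_step G U T \<alpha> A (U, \<sigma>) s)"
  shows "extract_tangles G U \<alpha> U \<sigma> \<noteq> {}"
proof -
  have cl: "closed_for G U \<alpha> \<sigma> U"
    unfolding closed_for_def
  proof (intro conjI ballI)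
    fix v assume "v \<in> U \<inter> pl G (1 - \<alpha>)"
    then show "succs G U v \<subseteq> U" by (auto simp: succs_def edges_in_def)
  next
    fix v assume v: "v \<in> U \<inter> pl G \<alpha>"
    have "\<sigma> v \<noteq> None"
    proof (cases "v \<in> A")
      case True
      show ?thesis
      proof
        assume "\<sigma> v = None"
        obtain w where "w \<in> U" "(v, w) \<in> E G" using tot v by blast
        then have "attr_step G U T \<alpha> A (U, \<sigma>) (U, \<sigma>(v \<mapsto> w))"
          using True v \<open>\<sigma> v = None\<close> by (intro attr_step.target) (auto simp: edges_in_def)
        then show False using nost by blast
      qed
    next
      case False then show ?thesis using inv v by (auto simp: attr_inv_def)
    qed
    then obtain w where "\<sigma> v = Some w" by blast
    moreover have "w \<in> U" using inv \<open>\<sigma> v = Some w\<close> by (auto simp: attr_inv_def)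
    ultimately show "\<exists>w. \<sigma> v = Some w \<and> w \<in> U" by blast
  qed
  have YU: "YZ G U \<alpha> U \<sigma> = U" using YZ_sub[of G U \<alpha> U \<sigma>] YZ_greatest[OF _ cl] by blast
  let ?H = "Hgraph G U \<alpha> U \<sigma>"
  have HY: "?H \<subseteq> U \<times> U" using Hgraph_sub[of G U \<alpha> U \<sigma>] YU by simp
  have out: "\<forall>v\<in>U. \<exists>w. (v, w) \<in> ?H"
  proof
    fix v assume v: "v \<in> U"
    then have "v \<in> V G" using UV by blast
    then consider "v \<in> pl G \<alpha>" | "v \<in> pl G (1 - \<alpha>)" using pl_cases[OF al, of v G] by blast
    then show "\<exists>w. (v, w) \<in> ?H"
    proof cases
      case 1
      then obtain w where "\<sigma> v = Some w" using cl v unfolding closed_for_def by blast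
      then show ?thesis using 1 v YU by (auto simp: Hgraph_def)
    next
      case 2
      obtain w where "w \<in> U" "(v, w) \<in> E G" using tot v by blast
      then show ?thesis using 2 v YU by (auto simp: Hgraph_def edges_in_def)
    qed
  qed
  have fin: "finite U" using UV pg finite_subset by (auto simp: parity_game_def)
  obtain C where "bottom_scc U ?H C" "\<exists>u\<in>C. \<exists>w\<in>C. (u, w) \<in> ?H"
    using bscc_exists[OF fin HY ne out] by blast
  then have "(C, \<sigma> |` C) \<in> extract_tangles G U \<alpha> U \<sigma>"
    unfolding extract_tangles_def using YU by simp
  then show ?thesis by blast
qed



definition GE :: "('v, 'a) pgame_scheme \<Rightarrow> (nat \<Rightarrow> 'v set) \<Rightarrow> (nat \<Rightarrow> 'v strat) \<Rightarrow> nat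
    \<Rightarrow> ('v \<times> 'v) set" where
  "GE G W S \<beta> = {(u, w). u \<in> W \<beta> \<and> ((u \<in> pl G \<beta> \<and> S \<beta> u = Some w)
     \<or> (u \<in> pl G (1 - \<beta>) \<and> (u, w) \<in> E G))}"

definition pinv :: "('v, 'a) pgame_scheme \<Rightarrow> 'v set \<Rightarrow> (nat \<Rightarrow> 'v set) \<Rightarrow> (nat \<Rightarrow> 'v strat) \<Rightarrow> nat
    \<Rightarrow> bool" where
  "pinv G R W S \<beta> \<longleftrightarrow> strategy G \<beta> (S \<beta>) \<and> dom (S \<beta>) \<subseteq> W \<beta> \<and>
     (\<forall>u \<in> W \<beta> \<inter> pl G \<beta>. \<exists>w. S \<beta> u = Some w \<and> w \<in> W \<beta>) \<and>
     (\<forall>u \<in> W \<beta> \<inter> pl G (1 - \<beta>). \<forall>w. (u, w) \<in> E G \<longrightarrow> w \<in> W \<beta>) \<and>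
     (\<forall>u \<in> R \<inter> pl G \<beta>. \<forall>w. (u, w) \<in> E G \<longrightarrow> w \<notin> W \<beta>) \<and>
     cw_win G (GE G W S \<beta>) \<beta>"

definition SInv :: "('v, 'a) pgame_scheme \<Rightarrow> 'v set \<Rightarrow> (nat \<Rightarrow> 'v set) \<Rightarrow> (nat \<Rightarrow> 'v strat)
    \<Rightarrow> bool" where
  "SInv G R W S \<longleftrightarrow> R \<subseteq> V G \<and> W 0 \<union> W 1 \<union> R = V G \<and> W 0 \<inter> W 1 = {} \<and> W 0 \<inter> R = {} \<and>
     W 1 \<inter> R = {} \<and> (\<forall>v\<in>R. \<exists>w\<in>R. (v, w) \<in> E G) \<and> pinv G R W S 0 \<and> pinv G R W S 1"

lemma SInv_init: "parity_game G \<Longrightarrow> SInv G (V G) (\<lambda>_. {}) (\<lambda>_. Map.empty)"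
proof -
  assume pg: "parity_game G"
  have "GE G (\<lambda>_. {}) (\<lambda>_. Map.empty) \<beta> = {}" for \<beta> by (simp add: GE_def)
  then have "pinv G (V G) (\<lambda>_. {}) (\<lambda>_. Map.empty) \<beta>" for \<beta>
    by (simp add: pinv_def strategy_def cw_win_empty)
  moreover have "\<forall>v\<in>V G. \<exists>w\<in>V G. (v, w) \<in> E G" using pg unfolding parity_game_def by blast
  ultimately show ?thesis by (simp add: SInv_def)
qed


lemma SInv_attr_done:
  assumes si: "SInv G R W S" and pg: "parity_game G" and gd: "good_tangle G d"
    and dR: "fst d \<subseteq> R" and esc: "escapes G R d = {}"
    and ai: "attr_inv G R \<alpha> (fst d) Z \<sigma>" and al: "\<alpha> = tw G d"
    and nost: "\<not> (\<exists>s. attr_step G R {} \<alpha> (fst d) (Z, \<sigma>) s)"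
  shows "SInv G (R - Z) (W(\<alpha> := W \<alpha> \<union> Z)) (S(\<alpha> := S \<alpha> ++ \<sigma> ++ snd d))"
proof -
  define W' where "W' = W(\<alpha> := W \<alpha> \<union> Z)"
  define S' where "S' = S(\<alpha> := S \<alpha> ++ \<sigma> ++ snd d)"
  have a2: "\<alpha> < 2" using al tw_lt by simp
  have a01: "\<alpha> \<in> {0, 1}" "1 - \<alpha> \<in> {0, 1}" "1 - (1 - \<alpha>) = \<alpha>" "1 - \<alpha> \<noteq> \<alpha>" using a2 by (cases "\<alpha> = 0"; simp)+
  have VR: "R \<subseteq> V G" and cov: "W 0 \<union> W 1 \<union> R = V G" and d01: "W 0 \<inter> W 1 = {}"
    and d0: "W 0 \<inter> R = {}" and d1: "W 1 \<inter> R = {}" and tot: "\<forall>v\<in>R. \<exists>w\<in>R. (v, w) \<in> E G"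
    using si by (auto simp: SInv_def)
  have pa: "pinv G R W S \<alpha>" and pb: "pinv G R W S (1 - \<alpha>)"
    using si a01 by (auto simp: SInv_def)
  have covab: "W \<alpha> \<union> W (1 - \<alpha>) \<union> R = V G" and dab: "W \<alpha> \<inter> W (1 - \<alpha>) = {}"
    and dWa: "W \<alpha> \<inter> R = {}" and dWb: "W (1 - \<alpha>) \<inter> R = {}"
  proof -
    have c: "(\<alpha> = 0 \<and> 1 - \<alpha> = 1) \<or> (\<alpha> = 1 \<and> 1 - \<alpha> = 0)" using a2 by auto
    show "W \<alpha> \<union> W (1 - \<alpha>) \<union> R = V G" using c cov by (elim disjE conjE) (simp_all add: Un_commute)
    show "W \<alpha> \<inter> W (1 - \<alpha>) = {}" using c d01 by (elim disjE conjE) (simp_all add: Int_commute)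
    show "W \<alpha> \<inter> R = {}" using c d0 d1 by (elim disjE conjE) simp_all
    show "W (1 - \<alpha>) \<inter> R = {}" using c d0 d1 by (elim disjE conjE) simp_all
  qed
  have ZR: "Z \<subseteq> R" and dZ: "fst d \<subseteq> Z" and dsig: "dom \<sigma> \<subseteq> Z \<inter> pl G \<alpha>"
    and sigE: "\<And>u w. \<sigma> u = Some w \<Longrightarrow> (u, w) \<in> edges_in G R \<and> w \<in> Z"
    and sigD: "\<And>u. u \<in> Z - fst d \<Longrightarrow> u \<in> pl G \<alpha> \<Longrightarrow> \<sigma> u \<noteq> None"
    and oppZ: "\<And>u. u \<in> Z - fst d \<Longrightarrow> u \<in> pl G (1 - \<alpha>) \<Longrightarrow> succs G R u \<subseteq> Z"
    and cwHn: "cw_win G (Hn G R \<alpha> (fst d) Z \<sigma>) \<alpha>"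
    using ai unfolding attr_inv_def by auto
  have gd1: "dom (snd d) \<subseteq> fst d \<inter> pl G \<alpha>"
    and gdE: "\<And>u w. snd d u = Some w \<Longrightarrow> (u, w) \<in> E G \<and> w \<in> fst d"
    and gdD: "\<And>u. u \<in> fst d \<Longrightarrow> u \<in> pl G \<alpha> \<Longrightarrow> snd d u \<noteq> None"
    and gdcw: "cw_win G (tg G d) \<alpha>"
    using gd al unfolding good_tangle_def by auto
  have nown: "\<And>u w. u \<in> R \<Longrightarrow> u \<notin> Z \<Longrightarrow> u \<in> pl G \<alpha> \<Longrightarrow> w \<in> Z \<Longrightarrow> (u, w) \<in> E G \<Longrightarrow> False"
  proof -
    fix u w assume h: "u \<in> R" "u \<notin> Z" "u \<in> pl G \<alpha>" "w \<in> Z" "(u, w) \<in> E G"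
    then have "attr_step G R {} \<alpha> (fst d) (Z, \<sigma>) (insert u Z, \<sigma>(u \<mapsto> w))"
      using ZR by (intro attr_step.own) (auto simp: edges_in_def)
    then show False using nost by blast
  qed
  have nopp: "\<And>u. u \<in> R \<Longrightarrow> u \<notin> Z \<Longrightarrow> u \<in> pl G (1 - \<alpha>) \<Longrightarrow> succs G R u \<subseteq> Z \<Longrightarrow> False"
  proof -
    fix u assume h: "u \<in> R" "u \<notin> Z" "u \<in> pl G (1 - \<alpha>)" "succs G R u \<subseteq> Z"
    then have "attr_step G R {} \<alpha> (fst d) (Z, \<sigma>) (insert u Z, \<sigma>)"
      by (intro attr_step.opp) auto
    then show False using nost by blast
  qed
  have domSa: "dom (S \<alpha>) \<subseteq> W \<alpha>" using pa by (simp add: pinv_def)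
  have SaW: "\<And>u. u \<in> W \<alpha> \<Longrightarrow> S' \<alpha> u = S \<alpha> u"
  proof -
    fix u assume u: "u \<in> W \<alpha>"
    then have "u \<notin> R" using dWa by blast
    then have "\<sigma> u = None" "snd d u = None" using dsig gd1 ZR dR by auto
    then show "S' \<alpha> u = S \<alpha> u" by (simp add: S'_def map_add_def)
  qed
  have Sad: "\<And>u. u \<in> fst d \<Longrightarrow> u \<in> pl G \<alpha> \<Longrightarrow> S' \<alpha> u = snd d u"
  proof -
    fix u assume "u \<in> fst d" "u \<in> pl G \<alpha>"
    then obtain w where "snd d u = Some w" using gdD by blast
    then show "S' \<alpha> u = snd d u" by (simp add: S'_def map_add_def)
  qed
  have SaZ: "\<And>u. u \<in> R \<Longrightarrow> u \<notin> fst d \<Longrightarrow> S' \<alpha> u = \<sigma> u"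
  proof -
    fix u assume u: "u \<in> R" "u \<notin> fst d"
    then have "snd d u = None" "S \<alpha> u = None" using gd1 domSa dWa by auto
    then show "S' \<alpha> u = \<sigma> u" by (simp add: S'_def map_add_def split: option.splits)
  qed
  have oppout: "\<And>u w. u \<in> R \<Longrightarrow> u \<in> pl G (1 - \<alpha>) \<Longrightarrow> (u, w) \<in> E G \<Longrightarrow> w \<notin> W \<alpha> \<Longrightarrow> w \<in> R"
  proof -
    fix u w assume h: "u \<in> R" "u \<in> pl G (1 - \<alpha>)" "(u, w) \<in> E G" "w \<notin> W \<alpha>"
    have "w \<notin> W (1 - \<alpha>)" using pb h unfolding pinv_def by blast
    moreover have "w \<in> V G" using pg_E[OF pg h(3)] by blast
    ultimately show "w \<in> R" using covab h(4) by blast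
  qed
  have strat: "strategy G \<alpha> (S' \<alpha>)"
  proof -
    have "dom (S' \<alpha>) \<subseteq> pl G \<alpha>" using pa dsig gd1 unfolding pinv_def strategy_def S'_def by auto
    moreover have "\<forall>v w. S' \<alpha> v = Some w \<longrightarrow> (v, w) \<in> E G"
      using pa sigE gdE unfolding pinv_def strategy_def S'_def
      by (auto simp: map_add_Some_iff edges_in_def)
    ultimately show ?thesis by (simp add: strategy_def)
  qed
  have domS': "dom (S' \<alpha>) \<subseteq> W' \<alpha>" using domSa dsig gd1 dZ unfolding S'_def W'_def by auto
  have clo1: "\<forall>u \<in> W' \<alpha> \<inter> pl G \<alpha>. \<exists>w. S' \<alpha> u = Some w \<and> w \<in> W' \<alpha>"
  proof
    fix u assume u: "u \<in> W' \<alpha> \<inter> pl G \<alpha>"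
    consider "u \<in> W \<alpha>" | "u \<in> fst d" | "u \<in> Z - fst d" using u by (auto simp: W'_def)
    then show "\<exists>w. S' \<alpha> u = Some w \<and> w \<in> W' \<alpha>"
    proof cases
      case 1 then show ?thesis using pa u SaW unfolding pinv_def W'_def by auto
    next
      case 2 then obtain w where "snd d u = Some w" using gdD u by blast
      then show ?thesis using 2 u Sad gdE dZ unfolding W'_def by auto
    next
      case 3 then obtain w where "\<sigma> u = Some w" using sigD u by blast
      then show ?thesis using 3 u SaZ sigE ZR unfolding W'_def by auto
    qed
  qed
  have clo2: "\<forall>u \<in> W' \<alpha> \<inter> pl G (1 - \<alpha>). \<forall>w. (u, w) \<in> E G \<longrightarrow> w \<in> W' \<alpha>"
  proof (intro ballI allI impI)
    fix u w assume u: "u \<in> W' \<alpha> \<inter> pl G (1 - \<alpha>)" and e: "(u, w) \<in> E G"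
    show "w \<in> W' \<alpha>"
    proof (cases "u \<in> W \<alpha>")
      case True then show ?thesis using pa u e unfolding pinv_def W'_def by auto
    next
      case False
      then have uZ: "u \<in> Z" using u by (auto simp: W'_def)
      show ?thesis
      proof (cases "w \<in> W \<alpha>")
        case True then show ?thesis by (simp add: W'_def)
      next
        case False
        then have wR: "w \<in> R" using oppout uZ ZR u e by blast
        have "w \<in> Z"
        proof (cases "u \<in> fst d")
          case True
          show ?thesis
          proof (rule ccontr)
            assume "w \<notin> Z"
            then have "w \<in> escapes G R d" using True u e wR dZ ZR al
              by (auto simp: escapes_def edges_in_def)
            then show False using esc by blast
          qed
        next
          case False
          then have "succs G R u \<subseteq> Z" using oppZ uZ u by blast
          then show ?thesis using wR uZ ZR e by (auto simp: succs_def edges_in_def)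
        qed
        then show ?thesis by (simp add: W'_def)
      qed
    qed
  qed
  have rout: "\<forall>u \<in> (R - Z) \<inter> pl G \<alpha>. \<forall>w. (u, w) \<in> E G \<longrightarrow> w \<notin> W' \<alpha>"
    using pa nown unfolding pinv_def W'_def by auto
  have cw: "cw_win G (GE G W' S' \<alpha>) \<alpha>"
  proof (rule L_ext[of "GE G W S \<alpha>" "W \<alpha>"])
    show "GE G W S \<alpha> \<subseteq> W \<alpha> \<times> W \<alpha>"
    proof
      fix x assume "x \<in> GE G W S \<alpha>"
      then obtain a b where ab: "x = (a, b)" "a \<in> W \<alpha>"
        "(a \<in> pl G \<alpha> \<and> S \<alpha> a = Some b) \<or> (a \<in> pl G (1 - \<alpha>) \<and> (a, b) \<in> E G)"
        unfolding GE_def by blast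
      from ab(3) have "b \<in> W \<alpha>"
      proof
        assume h: "a \<in> pl G \<alpha> \<and> S \<alpha> a = Some b"
        then obtain w where "S \<alpha> a = Some w" "w \<in> W \<alpha>" using pa ab(2) unfolding pinv_def by blast
        then show ?thesis using h by simp
      next
        assume h: "a \<in> pl G (1 - \<alpha>) \<and> (a, b) \<in> E G"
        then show ?thesis using pa ab(2) unfolding pinv_def by blast
      qed
      then show "x \<in> W \<alpha> \<times> W \<alpha>" using ab by simp
    qed
    show "cw_win G (GE G W S \<alpha>) \<alpha>" using pa by (simp add: pinv_def)
    show "GE G W' S' \<alpha> \<inter> W \<alpha> \<times> UNIV \<subseteq> GE G W S \<alpha>"
      using SaW unfolding GE_def W'_def by auto
    show "cw_win G (GE G W' S' \<alpha> \<inter> (- W \<alpha>) \<times> (- W \<alpha>)) \<alpha>"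
    proof (rule L_ext[of "tg G d" "fst d"])
      show "tg G d \<subseteq> fst d \<times> fst d" by (auto simp: tg_def)
      show "cw_win G (tg G d) \<alpha>" by (rule gdcw)
      show "GE G W' S' \<alpha> \<inter> (- W \<alpha>) \<times> (- W \<alpha>) \<inter> fst d \<times> UNIV \<subseteq> tg G d"
      proof
        fix x assume x: "x \<in> GE G W' S' \<alpha> \<inter> (- W \<alpha>) \<times> (- W \<alpha>) \<inter> fst d \<times> UNIV"
        then obtain u w where uw: "x = (u, w)" "u \<in> fst d" "w \<notin> W \<alpha>"
          "(u \<in> pl G \<alpha> \<and> S' \<alpha> u = Some w) \<or> (u \<in> pl G (1 - \<alpha>) \<and> (u, w) \<in> E G)"
          unfolding GE_def by auto
        from uw(4) show "x \<in> tg G d"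
        proof
          assume h: "u \<in> pl G \<alpha> \<and> S' \<alpha> u = Some w"
          then have "snd d u = Some w" using Sad[OF uw(2)] by simp
          then show ?thesis using gdE[of u w] uw h al by (auto simp: tg_def)
        next
          assume h: "u \<in> pl G (1 - \<alpha>) \<and> (u, w) \<in> E G"
          then have wR: "w \<in> R" using oppout uw dR by blast
          have "w \<in> fst d"
          proof (rule ccontr)
            assume "w \<notin> fst d"
            then have "w \<in> escapes G R d" using uw h wR dR al
              by (auto simp: escapes_def edges_in_def)
            then show False using esc by blast
          qed
          then show ?thesis using uw h al by (auto simp: tg_def)
        qed
      qed
      have "GE G W' S' \<alpha> \<inter> (- W \<alpha>) \<times> (- W \<alpha>) \<inter> (- fst d) \<times> (- fst d) \<subseteq> Hn G R \<alpha> (fst d) Z \<sigma>"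
      proof
        fix x assume x: "x \<in> GE G W' S' \<alpha> \<inter> (- W \<alpha>) \<times> (- W \<alpha>) \<inter> (- fst d) \<times> (- fst d)"
        then obtain u w where uw: "x = (u, w)" "u \<in> Z" "u \<notin> fst d" "w \<notin> W \<alpha>"
          "(u \<in> pl G \<alpha> \<and> S' \<alpha> u = Some w) \<or> (u \<in> pl G (1 - \<alpha>) \<and> (u, w) \<in> E G)"
          unfolding GE_def W'_def by auto
        from uw(5) show "x \<in> Hn G R \<alpha> (fst d) Z \<sigma>"
        proof
          assume h: "u \<in> pl G \<alpha> \<and> S' \<alpha> u = Some w"
          then have "\<sigma> u = Some w" using SaZ uw ZR by auto
          then show ?thesis using uw h by (auto simp: Hn_def)
        next
          assume h: "u \<in> pl G (1 - \<alpha>) \<and> (u, w) \<in> E G"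
          then have wR: "w \<in> R" using oppout uw ZR by blast
          then show ?thesis using uw h ZR by (auto simp: Hn_def edges_in_def)
        qed
      qed
      then show "cw_win G (GE G W' S' \<alpha> \<inter> (- W \<alpha>) \<times> (- W \<alpha>) \<inter> (- fst d) \<times> (- fst d)) \<alpha>"
        using cw_win_mono cwHn by blast
    qed
  qed
  have pa': "pinv G (R - Z) W' S' \<alpha>"
    using strat domS' clo1 clo2 rout cw by (simp add: pinv_def)
  have pb': "pinv G (R - Z) W' S' (1 - \<alpha>)"
  proof -
    have "W' (1 - \<alpha>) = W (1 - \<alpha>)" "S' (1 - \<alpha>) = S (1 - \<alpha>)" using a01 by (auto simp: W'_def S'_def)
    moreover have "GE G W' S' (1 - \<alpha>) = GE G W S (1 - \<alpha>)" using calculation by (simp add: GE_def)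
    ultimately show ?thesis using pb unfolding pinv_def by auto
  qed
  have tot': "\<forall>v\<in>R - Z. \<exists>w\<in>R - Z. (v, w) \<in> E G"
  proof
    fix v assume v: "v \<in> R - Z"
    then have "v \<in> V G" using VR by blast
    then consider "v \<in> pl G \<alpha>" | "v \<in> pl G (1 - \<alpha>)" using pl_cases[OF a2, of v G] by blast
    then show "\<exists>w\<in>R - Z. (v, w) \<in> E G"
    proof cases
      case 1
      obtain w where "w \<in> R" "(v, w) \<in> E G" using tot v by blast
      then show ?thesis using nown[of v w] v 1 by blast
    next
      case 2
      have "\<not> succs G R v \<subseteq> Z" using nopp[of v] v 2 by blast
      then show ?thesis by (auto simp: succs_def edges_in_def)
    qed
  qed
  have part: "W' 0 \<union> W' 1 \<union> (R - Z) = V G \<and> W' 0 \<inter> W' 1 = {} \<and> W' 0 \<inter> (R - Z) = {} \<and> W' 1 \<inter> (R - Z) = {}"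
  proof -
    have c: "\<alpha> = 0 \<or> \<alpha> = 1" using a2 by auto
    show ?thesis using c cov d01 d0 d1 ZR unfolding W'_def by (elim disjE) (simp; blast)+
  qed
  have "pinv G (R - Z) W' S' 0 \<and> pinv G (R - Z) W' S' 1"
  proof -
    have "\<alpha> = 0 \<or> \<alpha> = 1" using a2 by auto
    then show ?thesis using pa' pb' by (elim disjE) simp_all
  qed
  then show ?thesis using part tot' VR unfolding SInv_def W'_def S'_def by auto
qed



definition InvR :: "('v, 'a) pgame_scheme \<Rightarrow> 'v set \<Rightarrow> 'v tangle set \<Rightarrow> ('v \<Rightarrow> nat option) \<Rightarrow> bool" where
  "InvR G R T r \<longleftrightarrow> (\<forall>t\<in>T. fst t \<subseteq> R - dom r \<longrightarrow> escapes G R t \<subseteq> dom r \<longrightarrow> escapes G R t = {})"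

fun Inv :: "('v, 'a) pgame_scheme \<Rightarrow> 'v state \<Rightarrow> bool" where
  "Inv G (Solve R W S T) = (SInv G R W S \<and> (\<forall>t\<in>T. good_tangle G t))"
| "Inv G (Search R W S T r Y) = (SInv G R W S \<and> (\<forall>t\<in>T. good_tangle G t) \<and> (\<forall>t\<in>Y. good_tangle G t)
     \<and> R \<noteq> {} \<and> dom r \<subseteq> R \<and> (\<forall>v \<in> R - dom r. \<exists>w \<in> R - dom r. (v, w) \<in> E G)
     \<and> (R \<subseteq> dom r \<longrightarrow> \<not> Y \<subseteq> T) \<and> InvR G R T r)"
| "Inv G (TAttr R W S T r Y Z \<sigma>) = (SInv G R W S \<and> (\<forall>t\<in>T. good_tangle G t) \<and> (\<forall>t\<in>Y. good_tangle G t)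
     \<and> dom r \<subseteq> R \<and> \<not> R \<subseteq> dom r \<and> (\<forall>v \<in> R - dom r. \<exists>w \<in> R - dom r. (v, w) \<in> E G)
     \<and> InvR G R T r \<and> attr_inv G (R - dom r) (prio G (R - dom r) mod 2)
         ({v. pr G v = prio G (R - dom r)} \<inter> (R - dom r)) Z \<sigma>)"
| "Inv G (Attr R W S T d Z \<sigma>) = (SInv G R W S \<and> (\<forall>t\<in>T. good_tangle G t) \<and> good_tangle G d
     \<and> fst d \<subseteq> R \<and> escapes G R d = {} \<and> attr_inv G R (tw G d) (fst d) Z \<sigma>)"
| "Inv G (Done W S) = SInv G {} W S"

lemma extract_sub: "t \<in> extract_tangles G U \<alpha> Z \<sigma> \<Longrightarrow> fst t \<subseteq> Z"
  using YZ_sub[of G U \<alpha> Z \<sigma>] by (auto simp: extract_tangles_def bottom_scc_def)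

lemma tattr_next_inv:
  assumes inv: "Inv G (TAttr R W S T r Y Z \<sigma>)" and pg: "parity_game G"
    and U: "U' = R - dom r" and p: "p = prio G U'"
    and nost: "\<not> (\<exists>s. attr_step G U' T (p mod 2) ({v. pr G v = p} \<inter> U') (Z, \<sigma>) s)"
    and allesc: "\<forall>t \<in> extract_tangles G U' (p mod 2) Z \<sigma>. escapes G R t \<noteq> {}"
  shows "Inv G (Search R W S T (\<lambda>v. if v \<in> Z then Some p else r v)
             (Y \<union> extract_tangles G U' (p mod 2) Z \<sigma>))"
proof -
  define \<alpha> where "\<alpha> = p mod 2"
  define A where "A = {v. pr G v = p} \<inter> U'"
  define r' where "r' = (\<lambda>v. if v \<in> Z then Some p else r v)"
  define X where "X = extract_tangles G U' (p mod 2) Z \<sigma>"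
  have al: "\<alpha> < 2" by (simp add: \<alpha>_def)
  have si: "SInv G R W S" and gT: "\<forall>t\<in>T. good_tangle G t" and gY: "\<forall>t\<in>Y. good_tangle G t"
    and dr: "dom r \<subseteq> R" and nR: "\<not> R \<subseteq> dom r" and tot: "\<forall>v \<in> U'. \<exists>w \<in> U'. (v, w) \<in> E G"
    and ir: "InvR G R T r" and ai: "attr_inv G U' \<alpha> A Z \<sigma>"
    using inv U p by (auto simp: \<alpha>_def A_def)
  have RV: "R \<subseteq> V G" using si by (simp add: SInv_def)
  have UV: "U' \<subseteq> V G" using RV U by blast
  have ZU: "Z \<subseteq> U'" and AZ: "A \<subseteq> Z" using ai by (auto simp: attr_inv_def)
  have domr': "dom r' = Z \<union> dom r" by (auto simp: r'_def split: if_splits)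
  have gX: "\<forall>t\<in>X. good_tangle G t \<and> tw G t = \<alpha>"
    using extract_good[OF ai pg UV A_def p] unfolding X_def \<alpha>_def by blast
  have nown: "\<And>u w. u \<in> U' \<Longrightarrow> u \<notin> Z \<Longrightarrow> u \<in> pl G \<alpha> \<Longrightarrow> w \<in> Z \<Longrightarrow> (u, w) \<in> E G \<Longrightarrow> False"
  proof -
    fix u w assume h: "u \<in> U'" "u \<notin> Z" "u \<in> pl G \<alpha>" "w \<in> Z" "(u, w) \<in> E G"
    then have "attr_step G U' T \<alpha> A (Z, \<sigma>) (insert u Z, \<sigma>(u \<mapsto> w))"
      using ZU by (intro attr_step.own) (auto simp: edges_in_def)
    then show False using nost by (auto simp: \<alpha>_def A_def)
  qed
  have nopp: "\<And>u. u \<in> U' \<Longrightarrow> u \<notin> Z \<Longrightarrow> u \<in> pl G (1 - \<alpha>) \<Longrightarrow> succs G U' u \<subseteq> Z \<Longrightarrow> False"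
  proof -
    fix u assume h: "u \<in> U'" "u \<notin> Z" "u \<in> pl G (1 - \<alpha>)" "succs G U' u \<subseteq> Z"
    then have "attr_step G U' T \<alpha> A (Z, \<sigma>) (insert u Z, \<sigma>)"
      by (intro attr_step.opp) auto
    then show False using nost by (auto simp: \<alpha>_def A_def)
  qed
  have tot': "\<forall>v\<in>R - dom r'. \<exists>w\<in>R - dom r'. (v, w) \<in> E G"
  proof
    fix v assume v: "v \<in> R - dom r'"
    then have vU: "v \<in> U'" "v \<notin> Z" using U domr' by auto
    then have "v \<in> V G" using UV by blast
    then consider "v \<in> pl G \<alpha>" | "v \<in> pl G (1 - \<alpha>)" using pl_cases[OF al, of v G] by blast
    then have "\<exists>w\<in>U' - Z. (v, w) \<in> E G"
    proof cases
      case 1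
      obtain w where "w \<in> U'" "(v, w) \<in> E G" using tot vU by blast
      then show ?thesis using nown[of v w] vU 1 by blast
    next
      case 2
      have "\<not> succs G U' v \<subseteq> Z" using nopp[of v] vU 2 by blast
      then show ?thesis by (auto simp: succs_def edges_in_def)
    qed
    then show "\<exists>w\<in>R - dom r'. (v, w) \<in> E G" using U domr' by auto
  qed
  have ir': "InvR G R T r'"
    unfolding InvR_def
  proof (intro ballI impI)
    fix t assume t: "t \<in> T" and ft: "fst t \<subseteq> R - dom r'" and es: "escapes G R t \<subseteq> dom r'"
    have gt: "good_tangle G t" using gT t by blast
    have ftU: "fst t \<subseteq> U' - Z" using ft U domr' by auto
    have ftne: "fst t \<noteq> {}" using gt by (simp add: good_tangle_def)
    show "escapes G R t = {}"
    proof (cases "escapes G R t \<inter> Z = {}")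
      case True
      then have "escapes G R t \<subseteq> dom r" using es domr' by auto
      moreover have "fst t \<subseteq> R - dom r" using ftU U by auto
      ultimately show ?thesis using ir t by (auto simp: InvR_def)
    next
      case False
      then obtain e where e: "e \<in> escapes G R t" "e \<in> Z" by blast
      then obtain u where u: "e \<notin> fst t" "u \<in> fst t" "u \<in> pl G (1 - tw G t)" "(u, e) \<in> edges_in G R"
        by (auto simp: escapes_def)
      show ?thesis
      proof (cases "tw G t = \<alpha>")
        case True
        have esU: "escapes G U' t = escapes G R t \<inter> U'"
          by (rule escapes_sub) (use ftU U in auto)
        have "escapes G U' t \<subseteq> Z"
        proof
          fix x assume "x \<in> escapes G U' t"
          then have "x \<in> escapes G R t" "x \<in> U'" using esU by auto
          then show "x \<in> Z" using es domr' U by auto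
        qed
        moreover have "escapes G U' t \<noteq> {}" using esU e ZU by auto
        moreover have "\<not> fst t \<subseteq> Z" using ftU ftne by auto
        moreover have "fst t \<subseteq> U'" using ftU by auto
        ultimately have "attr_step G U' T \<alpha> A (Z, \<sigma>)
            (Z \<union> fst t, (snd t |` (fst t \<inter> pl G \<alpha>)) ++ \<sigma>)"
          using t True by (intro attr_step.tangle) auto
        then show ?thesis using nost by (auto simp: \<alpha>_def A_def)
      next
        case False
        then have "1 - tw G t = \<alpha>" using al tw_lt[of G t] by auto
        then have "u \<in> pl G \<alpha>" using u by simp
        moreover have "(u, e) \<in> E G" using u by (simp add: edges_in_def)
        ultimately show ?thesis using nown[of u e] u ftU e by blast
      qed
    qed
  qed
  have fin: "R \<subseteq> dom r' \<longrightarrow> \<not> Y \<union> X \<subseteq> T"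
  proof
    assume Rd: "R \<subseteq> dom r'"
    have ZU': "Z = U'" using Rd ZU U domr' by auto
    have Une: "U' \<noteq> {}" using nR U by auto
    have ai': "attr_inv G U' \<alpha> A U' \<sigma>" using ai ZU' by simp
    have nost': "\<not> (\<exists>s. attr_step G U' T \<alpha> A (U', \<sigma>) s)" using nost ZU' by (simp add: \<alpha>_def A_def)
    have "X \<noteq> {}" using extract_nonempty[OF ai' pg UV Une tot al nost'] ZU' by (simp add: X_def \<alpha>_def)
    then obtain t where tX: "t \<in> X" by blast
    have "t \<notin> T"
    proof
      assume tT: "t \<in> T"
      have twt: "tw G t = \<alpha>" using gX tX by blast
      have e0: "escapes G U' t = {}"
        using extract_no_escape[of t G U' \<alpha> Z \<sigma>] tX twt by (simp add: X_def \<alpha>_def)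
      have ftZ: "fst t \<subseteq> Z" using extract_sub tX unfolding X_def by blast
      have esU: "escapes G U' t = escapes G R t \<inter> U'"
        by (rule escapes_sub) (use ftZ ZU U in auto)
      have "escapes G R t \<subseteq> R" by (auto simp: escapes_def edges_in_def)
      then have "escapes G R t \<subseteq> dom r" using e0 esU U by auto
      moreover have "fst t \<subseteq> R - dom r" using ftZ ZU U by auto
      ultimately have "escapes G R t = {}" using ir tT by (auto simp: InvR_def)
      then show False using allesc tX by (auto simp: X_def)
    qed
    then show "\<not> Y \<union> X \<subseteq> T" using tX by blast
  qed
  have "dom r' \<subseteq> R" using domr' dr ZU U by auto
  moreover have "R \<noteq> {}" using nR by auto
  moreover have "\<forall>t\<in>Y \<union> X. good_tangle G t" using gY gX by blast
  ultimately show ?thesis using si gT tot' ir' fin unfolding r'_def X_def by simp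
qed

lemma Inv_step:
  assumes "alg_step G s s'" "Inv G s" "parity_game G"
  shows "Inv G s'"
  using assms(1)
proof (cases rule: alg_step.cases)
  case (solve_done R W S T)
  then show ?thesis using assms(2) by simp
next
  case (solve_search R W S T)
  then show ?thesis using assms(2) by (auto simp: SInv_def InvR_def)
next
  case (search_iter R r U' p W S T Y)
  have "attr_inv G U' (p mod 2) ({v. pr G v = p} \<inter> U') ({v. pr G v = p} \<inter> U') Map.empty"
    by (rule attr_inv_init) auto
  then show ?thesis using assms(2) search_iter by auto
next
  case (search_repeat R r W S T Y)
  then show ?thesis using assms(2) by (auto simp: SInv_def InvR_def)
next
  case (tattr_step U' R r p T Z \<sigma> Z' \<sigma>' W S Y)
  have i: "attr_inv G U' (p mod 2) ({v. pr G v = p} \<inter> U') Z \<sigma>" "\<forall>t\<in>T. good_tangle G t"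
    using assms(2) tattr_step by auto
  have "attr_inv G U' (p mod 2) ({v. pr G v = p} \<inter> U') Z' \<sigma>'"
    using attr_inv_step[OF tattr_step(5) i(1) i(2) assms(3)] by simp
  then show ?thesis using assms(2) tattr_step by auto
next
  case (tattr_dominion U' R r p T Z \<sigma> t W S Y)
  have si: "SInv G R W S" and ai: "attr_inv G U' (p mod 2) ({v. pr G v = p} \<inter> U') Z \<sigma>"
    using assms(2) tattr_dominion by auto
  have UV: "U' \<subseteq> V G" using si tattr_dominion by (auto simp: SInv_def)
  have g: "good_tangle G t" using extract_good[OF ai assms(3) UV refl tattr_dominion(4) refl tattr_dominion(6)] by blast
  have "fst t \<subseteq> R" using extract_sub[OF tattr_dominion(6)] ai tattr_dominion by (auto simp: attr_inv_def)
  then show ?thesis using assms(2) tattr_dominion g attr_inv_init[of "fst t" R G "tw G t"] by auto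
next
  case (tattr_next U' R r p T Z \<sigma> W S Y)
  then show ?thesis using tattr_next_inv[OF _ assms(3)] assms(2) by blast
next
  case (attr_step R d Z \<sigma> Z' \<sigma>' W S T)
  have "attr_inv G R (tw G d) (fst d) Z' \<sigma>'"
    using attr_inv_step[OF attr_step(3) _ _ assms(3) tw_lt] assms(2) attr_step by auto
  then show ?thesis using assms(2) attr_step by auto
next
  case (attr_done R d Z \<sigma> \<alpha> W S T)
  have i: "SInv G R W S" "good_tangle G d" "fst d \<subseteq> R" "escapes G R d = {}"
    "attr_inv G R \<alpha> (fst d) Z \<sigma>"
    using assms(2) attr_done by auto
  have "SInv G (R - Z) (W(\<alpha> := W \<alpha> \<union> Z)) (S(\<alpha> := S \<alpha> ++ \<sigma> ++ snd d))"
    by (rule SInv_attr_done[OF i(1) assms(3) i(2-5) attr_done(4)]) (use attr_done in simp)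
  then show ?thesis using assms(2) attr_done by auto
qed



lemma path_trancl:
  assumes "\<forall>k. i \<le> k \<longrightarrow> k < j \<longrightarrow> (\<pi> k, \<pi> (Suc k)) \<in> K" "i < j"
  shows "(\<pi> i, \<pi> j) \<in> K\<^sup>+"
  using assms
proof (induction j)
  case 0 then show ?case by simp
next
  case (Suc j)
  show ?case
  proof (cases "i = j")
    case True then show ?thesis using Suc.prems by auto
  next
    case False
    then have "(\<pi> i, \<pi> j) \<in> K\<^sup>+" using Suc by auto
    moreover have "(\<pi> j, \<pi> (Suc j)) \<in> K" using Suc.prems False by auto
    ultimately show ?thesis by (rule trancl_into_trancl)
  qed
qed

lemma infinite_gt: "infinite (S :: nat set) \<Longrightarrow> \<exists>n>m. n \<in> S"
proof (rule ccontr)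
  assume "infinite S" "\<not> (\<exists>n>m. n \<in> S)"
  then have "S \<subseteq> {..m}" by (auto simp: not_less)
  then show False using \<open>infinite S\<close> finite_subset by blast
qed

lemma play_win:
  assumes pg: "parity_game G" and inV: "\<forall>i. \<pi> i \<in> V G"
    and edges: "\<forall>i. (\<pi> i, \<pi> (Suc i)) \<in> H" and cw: "cw_win G H \<alpha>"
  shows "play_winner G \<pi> = \<alpha>"
proof -
  let ?P = "{p. infinite {i. pr G (\<pi> i) = p}}"
  have finV: "finite (V G)" using pg by (simp add: parity_game_def)
  have PV: "?P \<subseteq> (pr G) ` V G"
  proof
    fix p assume "p \<in> ?P"
    then have "infinite {i. pr G (\<pi> i) = p}" by simp
    then obtain i where "i \<in> {i. pr G (\<pi> i) = p}" using not_finite_existsD by blast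
    then have "p = pr G (\<pi> i)" by simp
    then show "p \<in> (pr G) ` V G" using inV by blast
  qed
  have finP: "finite ?P" using PV finV finite_subset by blast
  have neP: "?P \<noteq> {}"
  proof
    assume e: "?P = {}"
    have "(UNIV :: nat set) = (\<Union>p \<in> (pr G) ` V G. {i. pr G (\<pi> i) = p})" using inV by auto
    moreover have "finite (\<Union>p \<in> (pr G) ` V G. {i. pr G (\<pi> i) = p})"
    proof (intro finite_UN_I)
      show "finite ((pr G) ` V G)" using finV by blast
      fix p show "finite {i. pr G (\<pi> i) = p}" using e by blast
    qed
    ultimately show False by simp
  qed
  define m where "m = Max ?P"
  have mP: "m \<in> ?P" unfolding m_def by (rule Max_in[OF finP neP])
  have big: "finite {i. pr G (\<pi> i) > m}"
  proof -
    have "{i. pr G (\<pi> i) > m} = (\<Union>p \<in> {p \<in> (pr G) ` V G. p > m}. {i. pr G (\<pi> i) = p})"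
      using inV by auto
    moreover have "\<And>p. p > m \<Longrightarrow> finite {i. pr G (\<pi> i) = p}"
    proof (rule ccontr)
      fix p assume "p > m" "infinite {i. pr G (\<pi> i) = p}"
      then have "p \<in> ?P" by simp
      then have "p \<le> m" using finP by (simp add: m_def)
      then show False using \<open>p > m\<close> by simp
    qed
    moreover have "finite (\<Union>p \<in> {p \<in> (pr G) ` V G. p > m}. {i. pr G (\<pi> i) = p})"
    proof (intro finite_UN_I)
      show "finite {p \<in> (pr G) ` V G. p > m}" using finV by simp
      fix p assume "p \<in> {p \<in> (pr G) ` V G. p > m}"
      then show "finite {i. pr G (\<pi> i) = p}" using calculation(2) by blast
    qed
    ultimately show ?thesis by simp
  qed
  obtain N where N: "\<And>i. N \<le> i \<Longrightarrow> pr G (\<pi> i) \<le> m"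
  proof -
    obtain N where "\<forall>n\<in>{i. pr G (\<pi> i) > m}. n < N" using big finite_nat_set_iff_bounded by blast
    then have "\<And>i. N \<le> i \<Longrightarrow> pr G (\<pi> i) \<le> m" using not_le by force
    then show ?thesis by (rule that)
  qed
  let ?A = "{i. pr G (\<pi> i) = m \<and> N \<le> i}"
  have infA: "infinite ?A"
  proof
    assume fA: "finite ?A"
    have "{i. pr G (\<pi> i) = m} \<subseteq> ?A \<union> {..<N}" by auto
    then have "finite {i. pr G (\<pi> i) = m}" using fA finite_subset by blast
    then show False using mP by simp
  qed
  have "finite (\<pi> ` ?A)" using inV finV by (meson finite_subset image_subsetI)
  then obtain i0 where i0: "i0 \<in> ?A" "infinite {a \<in> ?A. \<pi> a = \<pi> i0}"
    using pigeonhole_infinite[OF infA] by blast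
  obtain j where j: "j > i0" "j \<in> {a \<in> ?A. \<pi> a = \<pi> i0}" using infinite_gt[OF i0(2)] by blast
  let ?v = "\<pi> i0"
  have "(\<pi> i0, \<pi> j) \<in> (lerel G H ?v)\<^sup>+"
  proof (rule path_trancl)
    show "i0 < j" using j by simp
    show "\<forall>k. i0 \<le> k \<longrightarrow> k < j \<longrightarrow> (\<pi> k, \<pi> (Suc k)) \<in> lerel G H ?v"
    proof (intro allI impI)
      fix k assume "i0 \<le> k" "k < j"
      then have "N \<le> k" "N \<le> Suc k" using i0 by auto
      then show "(\<pi> k, \<pi> (Suc k)) \<in> lerel G H ?v" using N edges i0 by (simp add: lerel_def)
    qed
  qed
  then have "(?v, ?v) \<in> (lerel G H ?v)\<^sup>+" using j by simp
  then have "pr G ?v mod 2 = \<alpha>" using cw by (simp add: cw_win_def)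
  then show ?thesis using i0 by (simp add: play_winner_def m_def)
qed

lemma exists_play:
  assumes pg: "parity_game G" and v: "v \<in> V G" and al: "\<alpha> < 2"
    and s1: "strategy G \<alpha> \<sigma>1" and s2: "strategy G (1 - \<alpha>) \<sigma>2"
  shows "\<exists>\<pi>. play G \<pi> \<and> \<pi> 0 = v \<and> consistent \<sigma>1 \<pi> \<and> consistent \<sigma>2 \<pi>"
proof -
  define nxt where "nxt x = (case \<sigma>1 x of Some w \<Rightarrow> w | None \<Rightarrow>
      (case \<sigma>2 x of Some w \<Rightarrow> w | None \<Rightarrow> (SOME w. (x, w) \<in> E G)))" for x
  have ed: "(x, nxt x) \<in> E G" if "x \<in> V G" for x
  proof (cases "\<sigma>1 x")
    case (Some w) then show ?thesis using s1 by (simp add: nxt_def strategy_def)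
  next
    case None
    show ?thesis
    proof (cases "\<sigma>2 x")
      case (Some w) then show ?thesis using s2 None by (simp add: nxt_def strategy_def)
    next
      case None2: None
      have "\<exists>w. (x, w) \<in> E G" using pg that by (simp add: parity_game_def)
      then have "(x, SOME w. (x, w) \<in> E G) \<in> E G" by (rule someI_ex)
      then show ?thesis using None None2 by (simp add: nxt_def)
    qed
  qed
  define \<pi> where "\<pi> i = (nxt ^^ i) v" for i
  have pS: "\<pi> (Suc i) = nxt (\<pi> i)" for i by (simp add: \<pi>_def)
  have inV: "\<pi> i \<in> V G" for i
  proof (induction i)
    case 0 then show ?case using v by (simp add: \<pi>_def)
  next
    case (Suc i) then show ?case using ed pS pg_E[OF pg] by metis
  qed
  have "play G \<pi>" using ed inV pS by (simp add: play_def)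
  moreover have "consistent \<sigma>1 \<pi>" by (auto simp: consistent_def pS nxt_def)
  moreover have "consistent \<sigma>2 \<pi>"
  proof (unfold consistent_def, intro allI impI)
    fix i assume "\<pi> i \<in> dom \<sigma>2"
    then have "\<pi> i \<in> pl G (1 - \<alpha>)" using s2 by (auto simp: strategy_def)
    then have "\<pi> i \<notin> dom \<sigma>1" using s1 pl_disj[OF pg al] by (auto simp: strategy_def)
    then have n1: "\<sigma>1 (\<pi> i) = None" by auto
    obtain y where y: "\<sigma>2 (\<pi> i) = Some y" using \<open>\<pi> i \<in> dom \<sigma>2\<close> by auto
    show "\<sigma>2 (\<pi> i) = Some (\<pi> (Suc i))" using n1 y by (simp add: pS nxt_def)
  qed
  ultimately show ?thesis by (auto simp: \<pi>_def)
qed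

lemma pinv_win:
  assumes pg: "parity_game G" and pi: "pinv G R W S \<beta>" and WV: "W \<beta> \<subseteq> V G" and b2: "\<beta> < 2"
    and pl: "play G \<pi>" "\<pi> 0 \<in> W \<beta>" "consistent (S \<beta>) \<pi>"
  shows "play_winner G \<pi> = \<beta>"
proof -
  have c1: "\<And>u. u \<in> W \<beta> \<Longrightarrow> u \<in> pl G \<beta> \<Longrightarrow> \<exists>w. S \<beta> u = Some w \<and> w \<in> W \<beta>"
    and c2: "\<And>u w. u \<in> W \<beta> \<Longrightarrow> u \<in> pl G (1 - \<beta>) \<Longrightarrow> (u, w) \<in> E G \<Longrightarrow> w \<in> W \<beta>"
    using pi unfolding pinv_def by blast+
  have step: "\<pi> (Suc i) \<in> W \<beta> \<and> (\<pi> i, \<pi> (Suc i)) \<in> GE G W S \<beta>" if hi: "\<pi> i \<in> W \<beta>" for i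
  proof -
    have "\<pi> i \<in> V G" using hi WV by blast
    then consider "\<pi> i \<in> pl G \<beta>" | "\<pi> i \<in> pl G (1 - \<beta>)" using pl_cases[OF b2, of "\<pi> i" G] by blast
    then show ?thesis
    proof cases
      case 1
      then obtain w where w: "S \<beta> (\<pi> i) = Some w" "w \<in> W \<beta>" using c1 hi by blast
      then have "S \<beta> (\<pi> i) = Some (\<pi> (Suc i))" using pl(3) by (auto simp: consistent_def)
      then show ?thesis using w 1 hi by (auto simp: GE_def)
    next
      case 2
      have "(\<pi> i, \<pi> (Suc i)) \<in> E G" using pl(1) by (simp add: play_def)
      then show ?thesis using c2 2 hi by (auto simp: GE_def)
    qed
  qed
  have stay: "\<pi> i \<in> W \<beta>" for i
    by (induction i) (use pl(2) step in auto)
  show ?thesis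
  proof (rule play_win[OF pg])
    show "\<forall>i. \<pi> i \<in> V G" using stay WV by blast
    show "\<forall>i. (\<pi> i, \<pi> (Suc i)) \<in> GE G W S \<beta>" using stay step by blast
    show "cw_win G (GE G W S \<beta>) \<beta>" using pi by (simp add: pinv_def)
  qed
qed

lemma SInv_solves:
  assumes pg: "parity_game G" and si: "SInv G {} W S"
  shows "solves G W S"
proof -
  have cov: "W 0 \<union> W 1 = V G" and dis: "W 0 \<inter> W 1 = {}" and p0: "pinv G {} W S 0" and p1: "pinv G {} W S 1"
    using si by (auto simp: SInv_def)
  have pb: "pinv G {} W S \<beta>" if "\<beta> \<in> {0, 1}" for \<beta> using that p0 p1 by auto
  have WV: "W \<beta> \<subseteq> V G" if "\<beta> \<in> {0, 1}" for \<beta> using that cov by auto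
  have win: "play_winner G \<pi> = \<beta>" if "\<beta> \<in> {0, 1}" "play G \<pi>" "\<pi> 0 \<in> W \<beta>" "consistent (S \<beta>) \<pi>" for \<beta> \<pi>
  proof -
    have "\<beta> < 2" using that(1) by auto
    then show ?thesis using pinv_win[OF pg pb[OF that(1)] WV[OF that(1)] _ that(2-4)] by blast
  qed
  have eq: "W \<beta> = {v. won_by G \<beta> v}" if b: "\<beta> \<in> {0, 1}" for \<beta>
  proof
    show "W \<beta> \<subseteq> {v. won_by G \<beta> v}"
    proof
      fix v assume "v \<in> W \<beta>"
      moreover have "strategy G \<beta> (S \<beta>)" using pb[OF b] by (simp add: pinv_def)
      ultimately show "v \<in> {v. won_by G \<beta> v}" using win[OF b] WV[OF b] unfolding won_by_def by blast
    qed
  next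
    show "{v. won_by G \<beta> v} \<subseteq> W \<beta>"
    proof
      fix v assume "v \<in> {v. won_by G \<beta> v}"
      then obtain \<sigma> where v: "v \<in> V G" and s: "strategy G \<beta> \<sigma>"
        and w: "\<And>\<pi>. play G \<pi> \<and> \<pi> 0 = v \<and> consistent \<sigma> \<pi> \<longrightarrow> play_winner G \<pi> = \<beta>"
        unfolding won_by_def by blast
      show "v \<in> W \<beta>"
      proof (rule ccontr)
        assume "v \<notin> W \<beta>"
        have b': "1 - \<beta> \<in> {0, 1}" "\<beta> < 2" "1 - \<beta> \<noteq> \<beta>" using b by auto
        have "\<beta> = 0 \<or> \<beta> = 1" using b by simp
        then have vW: "v \<in> W (1 - \<beta>)" using \<open>v \<notin> W \<beta>\<close> v cov by (elim disjE) auto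
        have s2: "strategy G (1 - \<beta>) (S (1 - \<beta>))" using pb[OF b'(1)] by (simp add: pinv_def)
        obtain \<pi> where \<pi>: "play G \<pi>" "\<pi> 0 = v" "consistent \<sigma> \<pi>" "consistent (S (1 - \<beta>)) \<pi>"
          using exists_play[OF pg v b'(2) s s2] by blast
        have "play_winner G \<pi> = \<beta>" using w \<pi> by blast
        moreover have "play_winner G \<pi> = 1 - \<beta>" using win[OF b'(1) \<pi>(1)] \<pi> vW by simp
        ultimately show False using b'(3) by simp
      qed
    qed
  qed
  have "\<forall>\<alpha>\<in>{0, 1}. strategy G \<alpha> (S \<alpha>) \<and>
        (\<forall>\<pi>. play G \<pi> \<and> \<pi> 0 \<in> W \<alpha> \<and> consistent (S \<alpha>) \<pi> \<longrightarrow> play_winner G \<pi> = \<alpha>) \<and>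
        W \<alpha> = {v. won_by G \<alpha> v}"
  proof (intro ballI conjI allI impI)
    fix \<alpha> :: nat assume a: "\<alpha> \<in> {0, 1}"
    show "strategy G \<alpha> (S \<alpha>)" using pb[OF a] by (simp add: pinv_def)
    show "W \<alpha> = {v. won_by G \<alpha> v}" by (rule eq[OF a])
    fix \<pi> assume "play G \<pi> \<and> \<pi> 0 \<in> W \<alpha> \<and> consistent (S \<alpha>) \<pi>"
    then show "play_winner G \<pi> = \<alpha>" using win[OF a] by blast
  qed
  then show ?thesis using cov dis by (simp add: solves_def)
qed


definition TU :: "('v, 'a) pgame_scheme \<Rightarrow> 'v tangle set" where
  "TU G = {t. fst t \<subseteq> V G \<and> dom (snd t) \<subseteq> V G \<and> ran (snd t) \<subseteq> V G}"

lemma TU_finite: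
  fixes G :: "('v, 'x) pgame_scheme"
  assumes pg: "parity_game G" shows "finite (TU G)"
proof -
  have finV: "finite (V G)" using pg by (simp add: parity_game_def)
  have sub: "{m :: 'v strat. dom m \<subseteq> V G \<and> ran m \<subseteq> V G} \<subseteq> (\<Union>A \<in> Pow (V G). {m. dom m = A \<and> ran m \<subseteq> V G})"
  proof
    fix m :: "'v strat" assume "m \<in> {m. dom m \<subseteq> V G \<and> ran m \<subseteq> V G}"
    then have "dom m \<in> Pow (V G)" "m \<in> {m'. dom m' = dom m \<and> ran m' \<subseteq> V G}" by auto
    then show "m \<in> (\<Union>A \<in> Pow (V G). {m. dom m = A \<and> ran m \<subseteq> V G})" by (rule UN_I)
  qed
  have finU: "finite (\<Union>A \<in> Pow (V G). {m :: 'v strat. dom m = A \<and> ran m \<subseteq> V G})"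
  proof (intro finite_UN_I)
    show "finite (Pow (V G))" using finV by simp
    fix A assume "A \<in> Pow (V G)"
    then have "finite A" using finV finite_subset by blast
    then show "finite {m :: 'v strat. dom m = A \<and> ran m \<subseteq> V G}"
      by (rule finite_set_of_finite_maps[OF _ finV])
  qed
  have fm: "finite {m :: 'v strat. dom m \<subseteq> V G \<and> ran m \<subseteq> V G}" by (rule finite_subset[OF sub finU])
  have fp: "finite (Pow (V G) \<times> {m :: 'v strat. dom m \<subseteq> V G \<and> ran m \<subseteq> V G})"
    using finV fm by (intro finite_cartesian_product) simp_all
  have st: "TU G \<subseteq> Pow (V G) \<times> {m :: 'v strat. dom m \<subseteq> V G \<and> ran m \<subseteq> V G}"
    unfolding TU_def by (simp add: subset_iff mem_Times_iff)
  show ?thesis by (rule finite_subset[OF st fp])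
qed

lemma good_TU: "parity_game G \<Longrightarrow> good_tangle G t \<Longrightarrow> t \<in> TU G"
  unfolding TU_def good_tangle_def ran_def using pg_E by blast

fun m1 :: "'v state \<Rightarrow> nat" where
  "m1 (Solve R W S T) = card R"
| "m1 (Search R W S T r Y) = card R"
| "m1 (TAttr R W S T r Y Z \<sigma>) = card R"
| "m1 (Attr R W S T d Z \<sigma>) = card R"
| "m1 (Done W S) = 0"

fun m2 :: "'v state \<Rightarrow> nat" where
  "m2 (Solve R W S T) = 2"
| "m2 (Search R W S T r Y) = 1"
| "m2 (TAttr R W S T r Y Z \<sigma>) = 1"
| "m2 (Attr R W S T d Z \<sigma>) = 0"
| "m2 (Done W S) = 0"

fun m3 :: "('v, 'a) pgame_scheme \<Rightarrow> 'v state \<Rightarrow> nat" where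
  "m3 G (Search R W S T r Y) = card (TU G - T)"
| "m3 G (TAttr R W S T r Y Z \<sigma>) = card (TU G - T)"
| "m3 G _ = 0"

fun m4 :: "'v state \<Rightarrow> nat" where
  "m4 (Search R W S T r Y) = card (R - dom r)"
| "m4 (TAttr R W S T r Y Z \<sigma>) = card (R - dom r)"
| "m4 _ = 0"

fun m5 :: "'v state \<Rightarrow> nat" where
  "m5 (Search R W S T r Y) = 1"
| "m5 _ = 0"

fun m6 :: "'v state \<Rightarrow> nat" where
  "m6 (TAttr R W S T r Y Z \<sigma>) = card (R - dom r - Z) + card (R - dom r - dom \<sigma>)"
| "m6 (Attr R W S T d Z \<sigma>) = card (R - Z) + card (R - dom \<sigma>)"
| "m6 _ = 0"

lemma attr_meas:
  assumes fin: "finite U" and ai: "attr_inv G U \<alpha> A Z' \<sigma>'"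
    and ch: "Z \<subseteq> Z' \<and> dom \<sigma> \<subseteq> dom \<sigma>' \<and> (Z \<noteq> Z' \<or> dom \<sigma> \<noteq> dom \<sigma>')"
  shows "card (U - Z') + card (U - dom \<sigma>') < card (U - Z) + card (U - dom \<sigma>)"
proof -
  have ZU: "Z' \<subseteq> U" "dom \<sigma>' \<subseteq> U" using ai by (auto simp: attr_inv_def)
  have l1: "card (U - Z') \<le> card (U - Z)" using ch fin by (intro card_mono) auto
  have l2: "card (U - dom \<sigma>') \<le> card (U - dom \<sigma>)" using ch fin by (intro card_mono) auto
  from ch consider "Z \<noteq> Z'" | "dom \<sigma> \<noteq> dom \<sigma>'" by blast
  then show ?thesis
  proof cases
    case 1
    then have "U - Z' \<subset> U - Z" using ch ZU by blast
    then have "card (U - Z') < card (U - Z)" using fin by (intro psubset_card_mono) auto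
    then show ?thesis using l2 by simp
  next
    case 2
    then have "U - dom \<sigma>' \<subset> U - dom \<sigma>" using ch ZU by blast
    then have "card (U - dom \<sigma>') < card (U - dom \<sigma>)" using fin by (intro psubset_card_mono) auto
    then show ?thesis using l1 by simp
  qed
qed

abbreviation "MS G \<equiv> measures [m1, m2, m3 G, m4, m5, m6]"

lemma meas_step:
  assumes st: "alg_step G s s'" and inv: "Inv G s" and pg: "parity_game G"
  shows "(s', s) \<in> MS G"
  using st
proof (cases rule: alg_step.cases)
  case (solve_done R W S T)
  then show ?thesis by (auto intro!: measures_lesseq measures_less)
next
  case (solve_search R W S T)
  then show ?thesis by (auto intro!: measures_lesseq measures_less)
next
  case (search_iter R r U' p W S T Y)
  then show ?thesis by (auto intro!: measures_lesseq measures_less)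
next
  case (search_repeat R r W S T Y)
  have i: "\<not> Y \<subseteq> T" "\<forall>t\<in>Y. good_tangle G t" using inv search_repeat by auto
  then obtain y where y: "y \<in> Y" "y \<notin> T" by blast
  then have "y \<in> TU G" using i good_TU[OF pg] by blast
  then have "TU G - (T \<union> Y) \<subset> TU G - T" using y by blast
  then have "card (TU G - (T \<union> Y)) < card (TU G - T)"
    using TU_finite[OF pg] by (intro psubset_card_mono) auto
  then show ?thesis using search_repeat by (auto intro!: measures_lesseq measures_less)
next
  case (tattr_step U' R r p T Z \<sigma> Z' \<sigma>' W S Y)
  have i: "attr_inv G U' (p mod 2) ({v. pr G v = p} \<inter> U') Z \<sigma>" "\<forall>t\<in>T. good_tangle G t"
    "R \<subseteq> V G"
    using inv tattr_step by (auto simp: SInv_def)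
  have r: "attr_inv G U' (p mod 2) ({v. pr G v = p} \<inter> U') Z' \<sigma>' \<and>
      Z \<subseteq> Z' \<and> dom \<sigma> \<subseteq> dom \<sigma>' \<and> (Z \<noteq> Z' \<or> dom \<sigma> \<noteq> dom \<sigma>')"
    using attr_inv_step[OF tattr_step(5) i(1) i(2) pg] by simp
  have "finite U'" using i(3) pg tattr_step finite_subset by (auto simp: parity_game_def)
  then have "card (U' - Z') + card (U' - dom \<sigma>') < card (U' - Z) + card (U' - dom \<sigma>)"
    using attr_meas r by blast
  then show ?thesis using tattr_step by (auto intro!: measures_lesseq measures_less)
next
  case (tattr_dominion U' R r p T Z \<sigma> t W S Y)
  then show ?thesis by (auto intro!: measures_lesseq measures_less)
next
  case (tattr_next U' R r p T Z \<sigma> W S Y)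
  have i: "attr_inv G U' (p mod 2) ({v. pr G v = p} \<inter> U') Z \<sigma>" "R \<subseteq> V G" "\<not> R \<subseteq> dom r"
    using inv tattr_next by (auto simp: SInv_def)
  have finR: "finite R" using i(2) pg finite_subset by (auto simp: parity_game_def)
  have finU: "finite U'" using finR tattr_next by simp
  have Une: "U' \<noteq> {}" using i(3) tattr_next by auto
  have "p \<in> (pr G) ` U'" unfolding tattr_next(4) prio_def using finU Une by (intro Max_in) auto
  then obtain a where a: "a \<in> U'" "pr G a = p" by auto
  then have aZ: "a \<in> Z" using i(1) by (auto simp: attr_inv_def)
  have ZU: "Z \<subseteq> U'" using i(1) by (simp add: attr_inv_def)
  have "dom (\<lambda>v. if v \<in> Z then Some p else r v) = Z \<union> dom r" by (auto split: if_splits)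
  moreover have "R - (Z \<union> dom r) \<subset> R - dom r" using aZ a ZU tattr_next by blast
  ultimately have "card (R - dom (\<lambda>v. if v \<in> Z then Some p else r v)) < card (R - dom r)"
    using finR by (simp add: psubset_card_mono)
  then show ?thesis using tattr_next by (auto intro!: measures_lesseq measures_less)
next
  case (attr_step R d Z \<sigma> Z' \<sigma>' W S T)
  have i: "attr_inv G R (tw G d) (fst d) Z \<sigma>" "R \<subseteq> V G"
    using inv attr_step by (auto simp: SInv_def)
  have r: "attr_inv G R (tw G d) (fst d) Z' \<sigma>' \<and>
      Z \<subseteq> Z' \<and> dom \<sigma> \<subseteq> dom \<sigma>' \<and> (Z \<noteq> Z' \<or> dom \<sigma> \<noteq> dom \<sigma>')"
    using attr_inv_step[OF attr_step(3) i(1) _ pg tw_lt] by simp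
  have "finite R" using i(2) pg finite_subset by (auto simp: parity_game_def)
  then have "card (R - Z') + card (R - dom \<sigma>') < card (R - Z) + card (R - dom \<sigma>)"
    using attr_meas r by blast
  then show ?thesis using attr_step by (auto intro!: measures_lesseq measures_less)
next
  case (attr_done R d Z \<sigma> \<alpha> W S T)
  have i: "attr_inv G R (tw G d) (fst d) Z \<sigma>" "R \<subseteq> V G" "good_tangle G d"
    using inv attr_done by (auto simp: SInv_def)
  have finR: "finite R" using i(2) pg finite_subset by (auto simp: parity_game_def)
  have "fst d \<noteq> {}" "fst d \<subseteq> Z" "Z \<subseteq> R" using i by (auto simp: good_tangle_def attr_inv_def)
  then have "R - Z \<subset> R" by blast
  then have "card (R - Z) < card R" using finR by (simp add: psubset_card_mono)
  then show ?thesis using attr_done by (auto intro!: measures_less)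
qed

lemma Inv_init: "parity_game G \<Longrightarrow> Inv G (init G)"
  by (simp add: init_def SInv_init)

lemma Inv_reach: "(alg_step G)\<^sup>*\<^sup>* (init G) s \<Longrightarrow> parity_game G \<Longrightarrow> Inv G s"
  by (induction rule: rtranclp_induct) (auto simp: Inv_init intro: Inv_step)

lemma no_stuck:
  assumes "\<not> (\<exists>s'. alg_step G s s')"
  shows "\<exists>W S. s = Done W S"
proof (cases s)
  case (Solve R W S T)
  show ?thesis
  proof (cases "R = {}")
    case True
    then have "alg_step G s (Done W S)" unfolding Solve by (rule alg_step.solve_done)
    then show ?thesis using assms by blast
  next
    case False
    then have "alg_step G s (Search R W S T Map.empty {})" unfolding Solve by (rule alg_step.solve_search)
    then show ?thesis using assms by blast
  qed
next
  case (Search R W S T r Y)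
  show ?thesis
  proof (cases "R \<subseteq> dom r")
    case True
    then have "alg_step G s (Search R W S (T \<union> Y) Map.empty {})" unfolding Search by (rule alg_step.search_repeat)
    then show ?thesis using assms by blast
  next
    case False
    then have "alg_step G s (TAttr R W S T r Y ({v. pr G v = prio G (R - dom r)} \<inter> (R - dom r)) Map.empty)"
      unfolding Search by (rule alg_step.search_iter[OF _ refl refl])
    then show ?thesis using assms by blast
  qed
next
  case (TAttr R W S T r Y Z \<sigma>)
  let ?U = "R - dom r" let ?p = "prio G (R - dom r)"
  show ?thesis
  proof (cases "\<exists>s. attr_step G ?U T (?p mod 2) ({v. pr G v = ?p} \<inter> ?U) (Z, \<sigma>) s")
    case True
    then obtain Z' \<sigma>' where "attr_step G ?U T (?p mod 2) ({v. pr G v = ?p} \<inter> ?U) (Z, \<sigma>) (Z', \<sigma>')"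
      by auto
    then have "alg_step G s (TAttr R W S T r Y Z' \<sigma>')"
      unfolding TAttr by (rule alg_step.tattr_step[OF refl refl])
    then show ?thesis using assms by blast
  next
    case False
    show ?thesis
    proof (cases "\<exists>t \<in> extract_tangles G ?U (?p mod 2) Z \<sigma>. escapes G R t = {}")
      case True
      then obtain t where "t \<in> extract_tangles G ?U (?p mod 2) Z \<sigma>" "escapes G R t = {}" by blast
      then have "alg_step G s (Attr R W S (T \<union> Y) t (fst t) Map.empty)"
        unfolding TAttr by (rule alg_step.tattr_dominion[OF refl refl False])
      then show ?thesis using assms by blast
    next
      case False2: False
      have "alg_step G s (Search R W S T (\<lambda>v. if v \<in> Z then Some ?p else r v)
             (Y \<union> extract_tangles G ?U (?p mod 2) Z \<sigma>))"
        unfolding TAttr by (rule alg_step.tattr_next[OF refl refl False]) (use False2 in blast)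
      then show ?thesis using assms by blast
    qed
  qed
next
  case (Attr R W S T d Z \<sigma>)
  show ?thesis
  proof (cases "\<exists>s. attr_step G R {} (tw G d) (fst d) (Z, \<sigma>) s")
    case True
    then obtain Z' \<sigma>' where "attr_step G R {} (tw G d) (fst d) (Z, \<sigma>) (Z', \<sigma>')" by auto
    then have "alg_step G s (Attr R W S T d Z' \<sigma>')" unfolding Attr by (rule alg_step.attr_step)
    then show ?thesis using assms by blast
  next
    case False
    have "alg_step G s (Solve (R - Z) (W(tw G d := W (tw G d) \<union> Z))
        (S(tw G d := S (tw G d) ++ \<sigma> ++ snd d)) {t \<in> T. fst t \<subseteq> R - Z})"
      unfolding Attr by (rule alg_step.attr_done[OF False refl])
    then show ?thesis using assms by blast
  qed
next
  case (Done W S)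
  then show ?thesis by blast
qed

theorem lemma10:
  assumes "parity_game G"
  shows "\<not> (\<exists>f. f 0 = init G \<and> (\<forall>i. alg_step G (f i) (f (Suc i))))
    \<and> (\<forall>s. (alg_step G)\<^sup>*\<^sup>* (init G) s \<and> \<not> (\<exists>s'. alg_step G s s') \<longrightarrow> (\<exists>W S. s = Done W S))
    \<and> (\<forall>W S. (alg_step G)\<^sup>*\<^sup>* (init G) (Done W S) \<longrightarrow> solves G W S)"
proof (intro conjI allI impI)
  show "\<not> (\<exists>f. f 0 = init G \<and> (\<forall>i. alg_step G (f i) (f (Suc i))))"
  proof
    assume "\<exists>f. f 0 = init G \<and> (\<forall>i. alg_step G (f i) (f (Suc i)))"
    then obtain f where f0: "f 0 = init G" and fs: "\<forall>i. alg_step G (f i) (f (Suc i))" by blast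
    have inv: "Inv G (f i)" for i
    proof (induction i)
      case 0 then show ?case using f0 Inv_init[OF assms] by simp
    next
      case (Suc i) then show ?case using Inv_step fs assms by blast
    qed
    have "\<forall>i. (f (Suc i), f i) \<in> MS G" using meas_step fs inv assms by blast
    moreover have "wf (MS G)" by simp
    ultimately show False using wf_iff_no_infinite_down_chain by blast
  qed
next
  fix s assume "(alg_step G)\<^sup>*\<^sup>* (init G) s \<and> \<not> (\<exists>s'. alg_step G s s')"
  then show "\<exists>W S. s = Done W S" using no_stuck by blast
next
  fix W S assume "(alg_step G)\<^sup>*\<^sup>* (init G) (Done W S)"
  then have "Inv G (Done W S)" using Inv_reach assms by blast
  then show "solves G W S" using SInv_solves assms by simp
qed


end
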